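(* Let $\theta\in(0,2\pi)$. Then for all $x,y\in S_\theta$: (1) if $\theta\in(0,\pi)$, then $j^*_{S_\theta}(x,y)\le{\rm th}(\rho_{S_\theta}(x,y)/2)\le\sqrt2(\pi/\theta)\sin(\theta/2)\,j^*_{S_\theta}(x,y)$; (2) if $\theta=\pi$, then $j^*_{S_\theta}(x,y)\le{\rm th}(\rho_{S_\theta}(x,y)/2)\le\sqrt2\,j^*_{S_\theta}(x,y)$; (3) if $\theta\in(\pi,2\pi)$, then $(\pi/\theta)\,j^*_{S_\theta}(x,y)\le{\rm th}(\rho_{S_\theta}(x,y)/2)\le2\sin(\theta/4)\,j^*_{S_\theta}(x,y)$.
   Context: $S_\theta=\{x\in\mathbb{C}:0<\arg(x)<\theta\}$. For a domain $G\subsetneq\mathbb{C}$, $d_G(x)=\inf\{|x-z|:z\in\partial G\}$ and $j^*_G(x,y)=\frac{|x-y|}{|x-y|+2\min\{d_G(x),d_G(y)\}}$. The hyperbolic metric of $\mathbb{H}^2=\{z:{\rm Im}\,z>0\}$ satisfies ${\rm th}(\rho_{\mathbb{H}^2}(u,v)/2)=|u-v|/|u-\overline{v}|$, and $\rho_{S_\theta}(x,y)=\rho_{\mathbb{H}^2}(x^{\pi/\theta},y^{\pi/\theta})$ (principal branch power). *)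

theory Defs
  imports "HOL-Analysis.Analysis"
begin

definition arg0 :: "complex \<Rightarrow> real" where
  "arg0 x = (if 0 \<le> Arg x then Arg x else Arg x + 2 * pi)"

definition sector :: "real \<Rightarrow> complex set" where
  "sector \<theta> = {x. x \<noteq> 0 \<and> 0 < arg0 x \<and> arg0 x < \<theta>}"

definition dG :: "complex set \<Rightarrow> complex \<Rightarrow> real" where
  "dG G x = infdist x (frontier G)"

definition jstar :: "complex set \<Rightarrow> complex \<Rightarrow> complex \<Rightarrow> real" where
  "jstar G x y = cmod (x - y) / (cmod (x - y) + 2 * min (dG G x) (dG G y))"

text \<open>Hyperbolic metric of the upper half plane: th(rho/2) = |u-v|/|u - conj v|.\<close>
definition rho_H :: "complex \<Rightarrow> complex \<Rightarrow> real" where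
  "rho_H u v = 2 * artanh (cmod (u - v) / cmod (u - cnj v))"

text \<open>Power map x \<mapsto> x^a with the branch of the argument in [0, 2 pi),
  which maps S_theta conformally onto the upper half plane for a = pi/theta.\<close>
definition spow :: "complex \<Rightarrow> real \<Rightarrow> complex" where
  "spow x a = of_real (cmod x powr a) * cis (a * arg0 x)"

definition rho_S :: "real \<Rightarrow> complex \<Rightarrow> complex \<Rightarrow> real" where
  "rho_S \<theta> x y = rho_H (spow x (pi / \<theta>)) (spow y (pi / \<theta>))"

end

theory Submission
  imports Defs
begin

lemma mono_by_deriv:
  fixes g g' :: "real \<Rightarrow> real"
  assumes "a \<le> b"
    and "\<And>t. a \<le> t \<Longrightarrow> t \<le> b \<Longrightarrow> (g has_real_derivative g' t) (at t)"
    and "\<And>t. a \<le> t \<Longrightarrow> t \<le> b \<Longrightarrow> 0 \<le> g' t"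
  shows "g a \<le> g b"
  using deriv_nonneg_imp_mono[of a b g g'] assms by auto

lemma sin_mult_le:
  fixes a x :: real
  assumes a: "1 \<le> a" and x: "0 \<le> x" and ax: "a * x \<le> pi"
  shows "sin (a * x) \<le> a * sin x"
proof -
  have "(\<lambda>t. a * sin t - sin (a * t)) 0 \<le> (\<lambda>t. a * sin t - sin (a * t)) x"
  proof (rule mono_by_deriv[where g = "\<lambda>t. a * sin t - sin (a * t)" and g' = "\<lambda>t. a * cos t - a * cos (a * t)"])
    fix t assume "0 \<le> t" "t \<le> x"
    show "((\<lambda>t. a * sin t - sin (a * t)) has_real_derivative a * cos t - a * cos (a * t)) (at t)"
      by (auto intro!: derivative_eq_intros)
  next
    fix t assume t: "0 \<le> t" "t \<le> x"
    have "t \<le> a * t" using a t by (simp add: mult_le_cancel_right1)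
    moreover have "a * t \<le> a * x" using a t by (simp add: mult_left_mono)
    ultimately have "cos (a * t) \<le> cos t" using ax t by (intro cos_monotone_0_pi_le) auto
    then show "0 \<le> a * cos t - a * cos (a * t)" using a
      by (simp add: mult_left_mono flip: right_diff_distrib)
  qed (use x in auto)
  then show ?thesis by simp
qed

lemma sin_mult_ge:
  fixes a x :: real
  assumes a: "0 \<le> a" "a \<le> 1" and x: "0 \<le> x" "x \<le> pi"
  shows "a * sin x \<le> sin (a * x)"
proof (cases "a = 0")
  case True then show ?thesis by simp
next
  case False
  then have a0: "0 < a" using a by simp
  have "sin ((1/a) * (a * x)) \<le> (1/a) * sin (a * x)"
    using a0 a x by (intro sin_mult_le) (auto simp: field_simps)
  then have "sin x \<le> (1/a) * sin (a * x)" using a0 by simp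
  then show ?thesis using a0 by (simp add: field_simps)
qed

lemma sin_ratio_aux:
  fixes a t :: real
  assumes a: "1 \<le> a" and t: "0 \<le> t" and at: "a * t \<le> pi"
  shows "a * cos (a * t) * sin t \<le> sin (a * t) * cos t"
proof -
  have "(\<lambda>t. sin (a * t) * cos t - a * cos (a * t) * sin t) 0 \<le> (\<lambda>t. sin (a * t) * cos t - a * cos (a * t) * sin t) t"
  proof (rule mono_by_deriv[where g = "\<lambda>t. sin (a * t) * cos t - a * cos (a * t) * sin t"
        and g' = "\<lambda>t. (a^2 - 1) * sin (a * t) * sin t"])
    fix u assume "0 \<le> u" "u \<le> t"
    show "((\<lambda>t. sin (a * t) * cos t - a * cos (a * t) * sin t) has_real_derivative (a^2 - 1) * sin (a * u) * sin u) (at u)"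
      by (auto intro!: derivative_eq_intros simp: power2_eq_square algebra_simps)
  next
    fix u assume u: "0 \<le> u" "u \<le> t"
    have "u \<le> a * u" using a u by (simp add: mult_le_cancel_right1)
    moreover have "a * u \<le> a * t" using a u by (simp add: mult_left_mono)
    ultimately have "a * u \<le> pi" "u \<le> pi" using at by linarith+
    then have "0 \<le> sin (a * u)" "0 \<le> sin u" using u a by (auto intro!: sin_ge_zero)
    moreover have "0 \<le> a^2 - 1" using a by (simp add: one_le_power)
    ultimately show "0 \<le> (a^2 - 1) * sin (a * u) * sin u" by simp
  qed (use t in auto)
  then show ?thesis by simp
qed

lemma sin_ratio_mono:
  fixes a x y :: real
  assumes a: "1 \<le> a" and x: "0 \<le> x" and xy: "x \<le> y" and ay: "a * y \<le> pi"
  shows "sin x * sin (a * y) \<le> sin y * sin (a * x)"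
proof (cases "x = 0 \<or> a = 1")
  case True then show ?thesis by auto
next
  case False
  then have x0: "0 < x" and a1: "1 < a" using x a by auto
  have ylt: "y < pi"
  proof -
    have "y < a * y" using a1 x0 xy by simp
    then show ?thesis using ay by simp
  qed
  have spos: "0 < sin t" if "x \<le> t" "t \<le> y" for t
    using that x0 ylt by (intro sin_gt_zero) auto
  have "(\<lambda>t. - (sin (a * t) / sin t)) x \<le> (\<lambda>t. - (sin (a * t) / sin t)) y"
  proof (rule mono_by_deriv[where g = "\<lambda>t. - (sin (a * t) / sin t)"
        and g' = "\<lambda>t. (sin (a * t) * cos t - a * cos (a * t) * sin t) / (sin t)^2"])
    fix u assume u: "x \<le> u" "u \<le> y"
    have "sin u \<noteq> 0" using spos[OF u] by simp
    then show "((\<lambda>t. - (sin (a * t) / sin t)) has_real_derivative (sin (a * u) * cos u - a * cos (a * u) * sin u) / (sin u)^2) (at u)"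
      by (auto intro!: derivative_eq_intros simp: power2_eq_square field_simps)
  next
    fix u assume u: "x \<le> u" "u \<le> y"
    have "a * u \<le> a * y" using a u by (simp add: mult_left_mono)
    then have "a * u \<le> pi" using ay by linarith
    then have "a * cos (a * u) * sin u \<le> sin (a * u) * cos u"
      using u x0 a by (intro sin_ratio_aux) auto
    then show "0 \<le> (sin (a * u) * cos u - a * cos (a * u) * sin u) / (sin u)^2" by simp
  qed (use xy in auto)
  then have "sin (a * y) / sin y \<le> sin (a * x) / sin x" by simp
  then show ?thesis using spos[of x] spos[of y] xy
    by (simp add: divide_simps mult.commute)
qed

lemma sinh_mult_ge:
  fixes a t :: real
  assumes a: "1 \<le> a" and t: "0 \<le> t"
  shows "a * sinh t \<le> sinh (a * t)"
proof -
  have "(\<lambda>t. sinh (a * t) - a * sinh t) 0 \<le> (\<lambda>t. sinh (a * t) - a * sinh t) t"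
  proof (rule mono_by_deriv[where g = "\<lambda>t. sinh (a * t) - a * sinh t"
        and g' = "\<lambda>t. a * cosh (a * t) - a * cosh t"])
    fix u assume "0 \<le> u" "u \<le> t"
    show "((\<lambda>t. sinh (a * t) - a * sinh t) has_real_derivative a * cosh (a * u) - a * cosh u) (at u)"
      by (auto intro!: derivative_eq_intros)
  next
    fix u assume u: "0 \<le> u" "u \<le> t"
    have "u \<le> a * u" using a u by (simp add: mult_le_cancel_right1)
    then have "cosh u \<le> cosh (a * u)" using u a by (subst cosh_real_nonneg_le_iff) auto
    then show "0 \<le> a * cosh (a * u) - a * cosh u" using a
      by (simp add: mult_left_mono flip: right_diff_distrib)
  qed (use t in auto)
  then show ?thesis by simp
qed

lemma sinh_mult_le:
  fixes a t :: real
  assumes a: "0 < a" "a \<le> 1" and t: "0 \<le> t"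
  shows "sinh (a * t) \<le> a * sinh t"
proof -
  have "(1/a) * sinh (a * t) \<le> sinh ((1/a) * (a * t))"
    using a t by (intro sinh_mult_ge) auto
  then have "(1/a) * sinh (a * t) \<le> sinh t" using a by simp
  then show ?thesis using a by (simp add: field_simps)
qed

lemma sinh_sq_ge:
  fixes a T :: real
  assumes a: "1 \<le> a"
  shows "a^2 * (sinh T)^2 \<le> (sinh (a * T))^2"
proof -
  have "a * sinh \<bar>T\<bar> \<le> sinh (a * \<bar>T\<bar>)" using a by (intro sinh_mult_ge) auto
  moreover have "0 \<le> a * sinh \<bar>T\<bar>" using a by simp
  ultimately have "(a * sinh \<bar>T\<bar>)^2 \<le> (sinh (a * \<bar>T\<bar>))^2" by (intro power_mono) auto
  moreover have "(sinh \<bar>T\<bar>)^2 = (sinh T)^2" "(sinh (a * \<bar>T\<bar>))^2 = (sinh (a * T))^2"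
    using a by (cases "T \<ge> 0"; simp add: abs_mult)+
  ultimately show ?thesis by (simp add: power_mult_distrib)
qed

lemma sinh_sq_le:
  fixes a T :: real
  assumes a: "0 < a" "a \<le> 1"
  shows "(sinh (a * T))^2 \<le> a^2 * (sinh T)^2"
proof -
  have "sinh (a * \<bar>T\<bar>) \<le> a * sinh \<bar>T\<bar>" using a by (intro sinh_mult_le) auto
  moreover have "0 \<le> sinh (a * \<bar>T\<bar>)" using a by simp
  ultimately have "(sinh (a * \<bar>T\<bar>))^2 \<le> (a * sinh \<bar>T\<bar>)^2" by (intro power_mono) auto
  moreover have "(sinh \<bar>T\<bar>)^2 = (sinh T)^2" "(sinh (a * \<bar>T\<bar>))^2 = (sinh (a * T))^2"
    using a by (cases "T \<ge> 0"; simp add: abs_mult)+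
  ultimately show ?thesis by (simp add: power_mult_distrib)
qed

lemma sinh_ge_self:
  fixes u :: real assumes "0 \<le> u" shows "u \<le> sinh u"
proof -
  have "(\<lambda>t. sinh t - t) 0 \<le> (\<lambda>t. sinh t - t) u"
  proof (rule mono_by_deriv[where g = "\<lambda>t. sinh t - t" and g' = "\<lambda>t. cosh t - 1"])
    fix t :: real show "((\<lambda>t. sinh t - t) has_real_derivative cosh t - 1) (at t)"
      by (auto intro!: derivative_eq_intros)
  next
    fix t :: real show "0 \<le> cosh t - 1" using cosh_real_ge_1[of t] by simp
  qed (use assms in auto)
  then show ?thesis by simp
qed

lemma F_nonneg:
  fixes w :: real assumes w: "0 \<le> w"
  shows "w * cosh w \<le> sinh w + sinh w ^ 3 / 3"
proof -
  have "(\<lambda>t. sinh t + sinh t ^ 3 / 3 - t * cosh t) 0 \<le> (\<lambda>t. sinh t + sinh t ^ 3 / 3 - t * cosh t) w"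
  proof (rule mono_by_deriv[where g = "\<lambda>t. sinh t + sinh t ^ 3 / 3 - t * cosh t"
        and g' = "\<lambda>t. sinh t * (sinh t * cosh t - t)"])
    fix t :: real show "((\<lambda>t. sinh t + sinh t ^ 3 / 3 - t * cosh t) has_real_derivative sinh t * (sinh t * cosh t - t)) (at t)"
      by (auto intro!: derivative_eq_intros simp: power2_eq_square algebra_simps)
  next
    fix t assume t: "0 \<le> t" "t \<le> w"
    have "2 * t \<le> sinh (2 * t)" using t by (intro sinh_ge_self) auto
    then have "t \<le> sinh t * cosh t" by (simp add: sinh_double)
    moreover have "0 \<le> sinh t" using t by simp
    ultimately show "0 \<le> sinh t * (sinh t * cosh t - t)" by simp
  qed (use w in auto)
  then show ?thesis by simp
qed

lemma G_mono:
  fixes v w :: real assumes v: "0 < v" and vw: "v \<le> w"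
  shows "v^2 / (sinh v)^2 + v^2 / 3 \<le> w^2 / (sinh w)^2 + w^2 / 3"
proof (rule mono_by_deriv[where g = "\<lambda>t. t^2 / (sinh t)^2 + t^2 / 3"
      and g' = "\<lambda>t. 2 * t * (sinh t + sinh t ^ 3 / 3 - t * cosh t) / (sinh t) ^ 3"])
  fix t assume t: "v \<le> t" "t \<le> w"
  then have "0 < sinh t" using v by simp
  then show "((\<lambda>t. t^2 / (sinh t)^2 + t^2 / 3) has_real_derivative 2 * t * (sinh t + sinh t ^ 3 / 3 - t * cosh t) / (sinh t) ^ 3) (at t)"
    by (auto intro!: derivative_eq_intros simp: power2_eq_square power3_eq_cube field_simps)
next
  fix t assume t: "v \<le> t" "t \<le> w"
  then have "0 < sinh t" "0 < t" using v by auto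
  moreover have "t * cosh t \<le> sinh t + sinh t ^ 3 / 3" using \<open>0 < t\<close> by (intro F_nonneg) auto
  ultimately show "0 \<le> 2 * t * (sinh t + sinh t ^ 3 / 3 - t * cosh t) / (sinh t) ^ 3" by simp
qed (use vw in auto)

lemma sinh_sq_pos: fixes T :: real shows "T \<noteq> 0 \<Longrightarrow> 0 < (sinh T)^2"
  by simp

lemma K1:
  fixes a T :: real assumes a: "1 \<le> a" and T: "T \<noteq> 0"
  shows "1 / (sinh T)^2 \<le> a^2 / (sinh (a * T))^2 + (a^2 - 1) / 3"
proof -
  have "\<bar>T\<bar>^2 / (sinh \<bar>T\<bar>)^2 + \<bar>T\<bar>^2 / 3 \<le> (a * \<bar>T\<bar>)^2 / (sinh (a * \<bar>T\<bar>))^2 + (a * \<bar>T\<bar>)^2 / 3"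
    using a T by (intro G_mono) (auto simp: mult_le_cancel_right1)
  moreover have "(sinh \<bar>T\<bar>)^2 = (sinh T)^2" "(sinh (a * \<bar>T\<bar>))^2 = (sinh (a * T))^2"
    using a by (cases "T \<ge> 0"; simp add: abs_mult)+
  ultimately have "T^2 / (sinh T)^2 + T^2 / 3 \<le> a^2 * T^2 / (sinh (a * T))^2 + a^2 * T^2 / 3"
    by (simp add: power_mult_distrib)
  then have "T^2 * (1 / (sinh T)^2) \<le> T^2 * (a^2 / (sinh (a * T))^2 + (a^2 - 1) / 3)"
    by (simp add: field_simps)
  moreover have "0 < T^2" using T by simp
  ultimately show ?thesis by (rule mult_left_le_imp_le)
qed

lemma K2:
  fixes a T :: real assumes a: "0 < a" "a \<le> 1" and T: "T \<noteq> 0"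
  shows "a^2 / (sinh (a * T))^2 \<le> 1 / (sinh T)^2 + (1 - a^2) / 3"
proof -
  have "(a * \<bar>T\<bar>)^2 / (sinh (a * \<bar>T\<bar>))^2 + (a * \<bar>T\<bar>)^2 / 3 \<le> \<bar>T\<bar>^2 / (sinh \<bar>T\<bar>)^2 + \<bar>T\<bar>^2 / 3"
    using a T by (intro G_mono) (auto simp: mult_le_cancel_right1)
  moreover have "(sinh \<bar>T\<bar>)^2 = (sinh T)^2" "(sinh (a * \<bar>T\<bar>))^2 = (sinh (a * T))^2"
    using a by (cases "T \<ge> 0"; simp add: abs_mult)+
  ultimately have "a^2 * T^2 / (sinh (a * T))^2 + a^2 * T^2 / 3 \<le> T^2 / (sinh T)^2 + T^2 / 3"
    by (simp add: power_mult_distrib)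
  then have "T^2 * (a^2 / (sinh (a * T))^2) \<le> T^2 * (1 / (sinh T)^2 + (1 - a^2) / 3)"
    by (simp add: field_simps)
  moreover have "0 < T^2" using T by simp
  ultimately show ?thesis by (rule mult_left_le_imp_le)
qed

lemma cos_ge_quad:
  fixes x :: real shows "1 - x^2 / 2 \<le> cos x"
proof -
  have *: "1 - y^2 / 2 \<le> cos y" if y: "0 \<le> y" for y :: real
  proof -
    have "(\<lambda>t. cos t - 1 + t^2 / 2) 0 \<le> (\<lambda>t. cos t - 1 + t^2 / 2) y"
    proof (rule mono_by_deriv[where g = "\<lambda>t. cos t - 1 + t^2 / 2" and g' = "\<lambda>t. t - sin t"])
      fix t :: real show "((\<lambda>t. cos t - 1 + t^2 / 2) has_real_derivative t - sin t) (at t)"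
        by (auto intro!: derivative_eq_intros)
    next
      fix t :: real assume "0 \<le> t" then show "0 \<le> t - sin t" using sin_x_le_x[of t] by simp
    qed (use y in auto)
    then show ?thesis by simp
  qed
  show ?thesis
  proof (cases "0 \<le> x")
    case True then show ?thesis using * by simp
  next
    case False then show ?thesis using *[of "-x"] by simp
  qed
qed

lemma sin_ge_cubic:
  fixes x :: real assumes x: "0 \<le> x" shows "x - x^3 / 6 \<le> sin x"
proof -
  have "(\<lambda>t. sin t - t + t^3 / 6) 0 \<le> (\<lambda>t. sin t - t + t^3 / 6) x"
  proof (rule mono_by_deriv[where g = "\<lambda>t. sin t - t + t^3 / 6" and g' = "\<lambda>t. cos t - 1 + t^2 / 2"])
    fix t :: real show "((\<lambda>t. sin t - t + t^3 / 6) has_real_derivative cos t - 1 + t^2 / 2) (at t)"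
      by (auto intro!: derivative_eq_intros simp: power2_eq_square)
  next
    fix t :: real show "0 \<le> cos t - 1 + t^2 / 2" using cos_ge_quad[of t] by simp
  qed (use x in auto)
  then show ?thesis by simp
qed

lemma L5x:
  fixes x :: real assumes x0: "0 < x" and x1: "x \<le> pi / 2"
  shows "6 * x^2 \<le> (sin x)^2 * (pi^2 + 2 * x^2)"
proof (cases "x \<le> 1")
  case True
  have s: "x * (1 - x^2 / 6) \<le> sin x" using sin_ge_cubic[of x] x0 by (simp add: algebra_simps power3_eq_cube power2_eq_square)
  have x2: "x^2 \<le> 1" using True x0 by (simp add: power_le_one)
  have c: "5/6 \<le> 1 - x^2 / 6" using x2 by simp
  have "0 \<le> x * (1 - x^2 / 6)" using x0 c by simp
  then have "(x * (1 - x^2 / 6))^2 \<le> (sin x)^2" using s by (intro power_mono) auto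
  moreover have "(5/6)^2 \<le> (1 - x^2 / 6)^2" using c by (intro power_mono) auto
  moreover have "9 \<le> pi^2 + 2 * x^2"
  proof -
    have "3 * 3 \<le> pi * pi" using pi_gt3 by (intro mult_mono) auto
    moreover have "0 \<le> x * x" by simp
    ultimately show ?thesis unfolding power2_eq_square by linarith
  qed
  ultimately have "x^2 * ((5/6)^2 * 9) \<le> x^2 * ((1 - x^2/6)^2 * (pi^2 + 2 * x^2))"
    by (intro mult_left_mono mult_mono) (auto simp del: power_divide)
  also have "\<dots> = (x * (1 - x^2 / 6))^2 * (pi^2 + 2 * x^2)" by (simp add: power_mult_distrib)
  also have "\<dots> \<le> (sin x)^2 * (pi^2 + 2 * x^2)"
    using \<open>(x * (1 - x^2 / 6))^2 \<le> (sin x)^2\<close> by (intro mult_right_mono) auto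
  finally have h: "x^2 * ((5/6)^2 * 9) \<le> (sin x)^2 * (pi^2 + 2 * x^2)" .
  have "x^2 * ((5/6)^2 * 9) = 25/4 * x^2" by (simp add: power2_eq_square)
  moreover have "0 \<le> x^2" by simp
  ultimately show ?thesis using h by linarith
next
  case False
  define e where "e = pi / 2 - x"
  have e0: "0 \<le> e" and e1: "e \<le> pi / 2 - 1" using x1 False by (auto simp: e_def)
  have pib: "3.14 \<le> pi" "pi \<le> 3.1416" using pi_approx by auto
  have e1': "e \<le> 0.5709" using e1 pib by simp
  have sx: "sin x = cos e" by (simp add: e_def cos_diff)
  have "1 - e^2 / 2 \<le> cos e" by (rule cos_ge_quad)
  have e2: "e^2 \<le> 0.5709^2" using e0 e1' by (intro power_mono) auto
  then have "0 \<le> 1 - e^2 / 2" by (simp add: power2_eq_square)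
  then have "(1 - e^2 / 2)^2 \<le> (sin x)^2" using \<open>1 - e^2 / 2 \<le> cos e\<close> sx by (intro power_mono) auto
  moreover have "1 - e^2 \<le> (1 - e^2 / 2)^2"
  proof -
    have "(1 - e^2 / 2)^2 = 1 - e^2 + (e^2)^2 / 4" by (simp add: power2_eq_square algebra_simps)
    moreover have "0 \<le> (e^2)^2" by simp
    ultimately show ?thesis by linarith
  qed
  ultimately have s2: "1 - e^2 \<le> (sin x)^2" by simp
  have "x^2 \<le> (pi/2)^2" using x0 x1 by (intro power_mono) auto
  then have A: "pi^2 + 2 * x^2 \<le> 1.5 * pi^2" by (simp add: power_divide)
  have "pi * pi \<le> (3927/1250) * (3927/1250)" using pib by (intro mult_mono) auto
  also have "\<dots> \<le> 98697/10000" by simp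
  finally have "pi^2 \<le> 98697/10000" by (simp add: power2_eq_square)
  then have "pi^2 + 2 * x^2 \<le> 1481/100" using A by linarith
  then have "e * (pi^2 + 2 * x^2) \<le> 0.5709 * (1481/100)"
    using e0 e1' by (intro mult_mono) auto
  also have "\<dots> \<le> 2 * (pi + 2 * x)" using pib False by simp
  finally have B: "e * (pi^2 + 2 * x^2) \<le> 2 * (pi + 2 * x)" .
  have "e^2 * (pi^2 + 2 * x^2) = e * (e * (pi^2 + 2 * x^2))" by (simp add: power2_eq_square)
  also have "\<dots> \<le> e * (2 * (pi + 2 * x))" using B e0 by (intro mult_left_mono) auto
  also have "\<dots> = pi^2 - 4 * x^2" by (simp add: e_def power2_eq_square algebra_simps)
  finally have C: "e^2 * (pi^2 + 2 * x^2) \<le> pi^2 - 4 * x^2" .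
  have "6 * x^2 \<le> (1 - e^2) * (pi^2 + 2 * x^2)" using C by (simp add: algebra_simps)
  also have "\<dots> \<le> (sin x)^2 * (pi^2 + 2 * x^2)" using s2 by (intro mult_right_mono) auto
  finally show ?thesis .
qed

lemma L5:
  fixes a :: real assumes a: "1 \<le> a"
  shows "3 \<le> (sin (pi / (2 * a)))^2 * (2 * a^2 + 1)"
proof -
  define x where "x = pi / (2 * a)"
  have x0: "0 < x" and x1: "x \<le> pi / 2" using a by (auto simp: x_def field_simps)
  have ax: "a = pi / (2 * x)" using a by (simp add: x_def)
  have "6 * x^2 \<le> (sin x)^2 * (pi^2 + 2 * x^2)" by (rule L5x[OF x0 x1])
  moreover have "(sin x)^2 * (pi^2 + 2 * x^2) = 2 * x^2 * ((sin x)^2 * (2 * a^2 + 1))"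
    using x0 by (simp add: ax field_simps power2_eq_square)
  ultimately have "2 * x^2 * 3 \<le> 2 * x^2 * ((sin x)^2 * (2 * a^2 + 1))" by simp
  then have "3 \<le> (sin x)^2 * (2 * a^2 + 1)" using x0 by (simp add: mult_le_cancel_left_pos)
  then show ?thesis by (simp add: x_def)
qed

lemma cos_le_zero_mid:
  fixes x :: real assumes "pi/2 \<le> x" "x \<le> 3*pi/2" shows "cos x \<le> 0"
proof -
  have "cos x = - cos (x - pi)" by (simp add: cos_diff)
  moreover have "0 \<le> cos (x - pi)" using assms by (intro cos_ge_zero) auto
  ultimately show ?thesis by simp
qed

lemma sin_le_zero_neg:
  fixes x :: real assumes "-pi \<le> x" "x \<le> 0" shows "sin x \<le> 0"
  using sin_ge_zero[of "-x"] assms by simp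

lemma arg0_range: "0 \<le> arg0 z \<and> arg0 z < 2 * pi"
  using Arg_bounded[of z] by (auto simp: arg0_def)

lemma arg0_polar: "z = complex_of_real (cmod z) * cis (arg0 z)"
proof -
  have "cis (arg0 z) = cis (Arg z)"
    by (simp add: arg0_def cis.ctr)
  then show ?thesis using rcis_cmod_Arg[of z] by (simp add: rcis_def)
qed

lemma Re_arg0: "Re z = cmod z * cos (arg0 z)"
  by (subst arg0_polar[of z]) simp

lemma Im_arg0: "Im z = cmod z * sin (arg0 z)"
  by (subst arg0_polar[of z]) simp

definition hl :: "real \<Rightarrow> complex \<Rightarrow> real" where
  "hl t z = Re z * sin t - Im z * cos t"

lemma hl_arg0: "hl t z = cmod z * sin (t - arg0 z)"
  by (simp add: hl_def Re_arg0[of z] Im_arg0[of z] sin_diff algebra_simps)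

lemma hl_lipschitz: "\<bar>hl t z - hl t w\<bar> \<le> cmod (z - w)"
proof -
  have "hl t z - hl t w = hl t (z - w)" by (simp add: hl_def algebra_simps)
  also have "\<bar>hl t (z - w)\<bar> \<le> cmod (z - w) * \<bar>sin (t - arg0 (z - w))\<bar>"
    by (simp add: hl_arg0 abs_mult)
  also have "\<dots> \<le> cmod (z - w)" using abs_sin_le_one
    by (simp add: mult_left_le)
  finally show ?thesis .
qed

lemma Im_lipschitz: "\<bar>Im z - Im w\<bar> \<le> cmod (z - w)"
  by (metis abs_Im_le_cmod minus_complex.simps(2))

lemma sector_iff_small:
  assumes t0: "0 < t" and tpi: "t \<le> pi"
  shows "z \<in> sector t \<longleftrightarrow> 0 < Im z \<and> 0 < hl t z"
proof
  assume z: "z \<in> sector t"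
  then have z0: "z \<noteq> 0" and a: "0 < arg0 z" "arg0 z < t" by (auto simp: sector_def)
  have "0 < sin (arg0 z)" using a tpi by (intro sin_gt_zero) auto
  moreover have "0 < sin (t - arg0 z)" using a tpi by (intro sin_gt_zero) auto
  ultimately show "0 < Im z \<and> 0 < hl t z" using z0 by (simp add: Im_arg0 hl_arg0)
next
  assume h: "0 < Im z \<and> 0 < hl t z"
  then have z0: "z \<noteq> 0" by auto
  have r: "0 < cmod z" using z0 by simp
  have s1: "0 < sin (arg0 z)" using h r by (simp add: Im_arg0 zero_less_mult_iff)
  have s2: "0 < sin (t - arg0 z)" using h r by (simp add: hl_arg0 zero_less_mult_iff)
  have g: "0 \<le> arg0 z" "arg0 z < 2 * pi" using arg0_range by auto
  have a1: "arg0 z < pi"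
  proof (rule ccontr)
    assume "\<not> arg0 z < pi"
    then have "sin (arg0 z) \<le> 0" using g by (intro sin_le_zero) auto
    then show False using s1 by simp
  qed
  have a0: "0 < arg0 z" using s1 g by (cases "arg0 z = 0") auto
  have a2: "arg0 z < t"
  proof (rule ccontr)
    assume "\<not> arg0 z < t"
    then have "sin (t - arg0 z) \<le> 0"
      using a1 t0 by (intro sin_le_zero_neg) auto
    then show False using s2 by simp
  qed
  show "z \<in> sector t" using z0 a0 a2 by (simp add: sector_def)
qed

lemma sector_iff_large:
  assumes t0: "pi < t" and tpi: "t < 2 * pi"
  shows "z \<in> sector t \<longleftrightarrow> 0 < Im z \<or> 0 < hl t z"
proof
  assume z: "z \<in> sector t"
  then have z0: "z \<noteq> 0" and a: "0 < arg0 z" "arg0 z < t" by (auto simp: sector_def)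
  show "0 < Im z \<or> 0 < hl t z"
  proof (cases "arg0 z < pi")
    case True
    then have "0 < sin (arg0 z)" using a by (intro sin_gt_zero) auto
    then show ?thesis using z0 by (simp add: Im_arg0)
  next
    case False
    then have "0 < sin (t - arg0 z)" using a tpi by (intro sin_gt_zero) auto
    then show ?thesis using z0 by (simp add: hl_arg0)
  qed
next
  assume h: "0 < Im z \<or> 0 < hl t z"
  then have z0: "z \<noteq> 0" by (auto simp: hl_def)
  have r: "0 < cmod z" using z0 by simp
  have g: "0 \<le> arg0 z" "arg0 z < 2 * pi" using arg0_range by auto
  show "z \<in> sector t"
  proof (rule ccontr)
    assume "z \<notin> sector t"
    then have "arg0 z = 0 \<or> t \<le> arg0 z" using z0 g by (auto simp: sector_def)
    then show False
    proof
      assume "arg0 z = 0"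
      moreover have "sin t < 0" using t0 tpi by (intro sin_lt_zero) auto
      ultimately show False using h r by (simp add: Im_arg0 hl_arg0 zero_less_mult_iff)
    next
      assume t: "t \<le> arg0 z"
      have "sin (arg0 z) \<le> 0" using t t0 g by (intro sin_le_zero) auto
      moreover have "sin (t - arg0 z) \<le> 0" using t g t0 by (intro sin_le_zero_neg) auto
      ultimately show False using h r
        by (auto simp: Im_arg0 hl_arg0 mult_le_0_iff zero_less_mult_iff)
    qed
  qed
qed

lemma dG_upper:
  assumes x: "x \<in> S" and q: "q \<notin> S"
  shows "dG S x \<le> cmod (x - q)" and "frontier S \<noteq> {}"
proof -
  have "closed_segment x q \<inter> frontier S \<noteq> {}"
  proof (rule connected_Int_frontier)
    show "connected (closed_segment x q)" by (simp add: convex_connected)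
    show "closed_segment x q \<inter> S \<noteq> {}" using x by auto
    show "closed_segment x q - S \<noteq> {}" using q by auto
  qed
  then obtain z where z: "z \<in> closed_segment x q" "z \<in> frontier S" by auto
  then have "dist z x \<le> dist x q" using dist_in_closed_segment by blast
  then have "dist x z \<le> dist x q" by (simp add: dist_commute)
  then show "dG S x \<le> cmod (x - q)" unfolding dG_def using z
    by (intro infdist_le2[of z]) (auto simp: dist_norm)
  show "frontier S \<noteq> {}" using z by auto
qed

lemma dG_lower:
  assumes b: "ball x R \<subseteq> S" and f: "frontier S \<noteq> {}"
  shows "R \<le> dG S x"
proof -
  have "ball x R \<subseteq> interior S" using b by (intro interior_maximal) auto
  then have "R \<le> dist x z" if "z \<in> frontier S" for z
    using that by (force simp: frontier_def)
  then show ?thesis unfolding dG_def infdist_def using f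
    by (auto intro!: cINF_greatest)
qed

lemma cmod_sqrt_eq: "(cmod w)^2 = h^2 \<Longrightarrow> cmod w = \<bar>h\<bar>"
  by (metis abs_norm_cancel power2_eq_iff_nonneg abs_ge_zero norm_ge_zero power2_abs)

lemma dist_Re: "cmod (x - complex_of_real (Re x)) = \<bar>Im x\<bar>"
  by (rule cmod_sqrt_eq) (simp add: cmod_power2)

lemma dist_line:
  fixes x :: complex and t :: real
  defines "c \<equiv> Re x * cos t + Im x * sin t"
  shows "cmod (x - complex_of_real c * cis t) = \<bar>hl t x\<bar>"
proof (rule cmod_sqrt_eq)
  let ?u = "Re x" and ?v = "Im x" and ?C = "cos t" and ?S = "sin t"
  have "(cmod (x - complex_of_real c * cis t))^2 = (?u - c * ?C)^2 + (?v - c * ?S)^2"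
    by (simp add: cmod_power2)
  also have "\<dots> = (?u * ?S - ?v * ?C)^2 + (?C^2 + ?S^2 - 1) * (c^2 - ?u^2 - ?v^2)"
    unfolding c_def by algebra
  also have "\<dots> = (hl t x)^2" by (simp add: hl_def)
  finally show "(cmod (x - complex_of_real c * cis t))^2 = (hl t x)^2" .
qed

lemma hl_line: "hl t (complex_of_real c * cis t) = 0"
  by (simp add: hl_def algebra_simps)

lemma dG_small:
  assumes t0: "0 < t" and tpi: "t \<le> pi" and x: "x \<in> sector t"
  shows "dG (sector t) x \<le> Im x" "dG (sector t) x \<le> hl t x"
    "min (Im x) (hl t x) \<le> dG (sector t) x"
proof -
  have xs: "0 < Im x" "0 < hl t x" using x sector_iff_small[OF t0 tpi] by auto
  have q1: "complex_of_real (Re x) \<notin> sector t" using sector_iff_small[OF t0 tpi] by simp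
  show "dG (sector t) x \<le> Im x" using dG_upper(1)[OF x q1] dist_Re[of x] xs by simp
  have f: "frontier (sector t) \<noteq> {}" using dG_upper(2)[OF x q1] .
  define c where "c = Re x * cos t + Im x * sin t"
  have q2: "complex_of_real c * cis t \<notin> sector t"
    using sector_iff_small[OF t0 tpi] hl_line[of t c] by simp
  show "dG (sector t) x \<le> hl t x" using dG_upper(1)[OF x q2] dist_line[of x t] xs
    by (simp add: c_def)
  have "ball x (min (Im x) (hl t x)) \<subseteq> sector t"
  proof
    fix z assume "z \<in> ball x (min (Im x) (hl t x))"
    then have d: "cmod (z - x) < min (Im x) (hl t x)" by (simp add: dist_norm norm_minus_commute)
    have "0 < Im z" using Im_lipschitz[of z x] d by linarith
    moreover have "0 < hl t z" using hl_lipschitz[of t z x] d by linarith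
    ultimately show "z \<in> sector t" using sector_iff_small[OF t0 tpi] by simp
  qed
  then show "min (Im x) (hl t x) \<le> dG (sector t) x" by (rule dG_lower[OF _ f])
qed

lemma sq_expand: "(a - r * c)^2 + (b - r * s)^2 = a^2 + b^2 + r^2 * (c^2 + s^2) - 2 * r * (a * c + b * s)" for a b r c s :: real
  by (simp add: power2_eq_square algebra_simps)

lemma middle_ball:
  fixes t phi r :: real
  assumes t: "pi < t" "t < 2 * pi" and p1: "pi / 2 \<le> phi" and p2: "phi \<le> t - pi / 2"
    and r: "0 < r" and x: "x = complex_of_real r * cis phi"
    and zx: "cmod (z - x) < r"
  shows "0 < Im z \<or> 0 < hl t z"
proof (rule ccontr)
  assume "\<not> (0 < Im z \<or> 0 < hl t z)"
  then have h1: "Im z \<le> 0" and h2: "hl t z \<le> 0" by auto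
  have st: "sin t < 0" using t by (intro sin_lt_zero) auto
  define al where "al = Im z / sin t"
  define be where "be = Re z - al * cos t"
  have al0: "0 \<le> al" using h1 st by (simp add: al_def divide_nonpos_neg)
  have imz: "Im z = al * sin t" using st by (simp add: al_def)
  have "hl t z = be * sin t" by (simp add: hl_def be_def imz algebra_simps)
  then have be0: "0 \<le> be" using h2 st by (simp add: mult_le_0_iff)
  have c1: "cos phi \<le> 0" using p1 p2 t by (intro cos_le_zero_mid) auto
  have c2: "cos (t - phi) \<le> 0" using p1 p2 t by (intro cos_le_zero_mid) auto
  have "Re z * cos phi + Im z * sin phi = be * cos phi + al * cos (t - phi)"
    by (simp add: be_def imz cos_diff algebra_simps)
  also have "\<dots> \<le> 0" using al0 be0 c1 c2 by (simp add: add_nonpos_nonpos mult_nonneg_nonpos)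
  finally have ip: "Re z * cos phi + Im z * sin phi \<le> 0" .
  have "(cmod (z - x))^2 = (Re (z - x))^2 + (Im (z - x))^2" by (rule cmod_power2)
  also have "\<dots> = (Re z - r * cos phi)^2 + (Im z - r * sin phi)^2" by (simp add: x)
  also have "\<dots> = (Re z)^2 + (Im z)^2 + r^2 - 2 * r * (Re z * cos phi + Im z * sin phi)"
    using sq_expand[of "Re z" r "cos phi" "Im z" "sin phi"] by simp
  finally have e: "(cmod (z - x))^2 = (Re z)^2 + (Im z)^2 + r^2 - 2 * r * (Re z * cos phi + Im z * sin phi)" .
  have "0 \<le> (Re z)^2 + (Im z)^2" by simp
  moreover have "2 * r * (Re z * cos phi + Im z * sin phi) \<le> 0" using ip r by (simp add: mult_nonneg_nonpos)
  ultimately have "r^2 \<le> (cmod (z - x))^2" using e by linarith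
  moreover have "(cmod (z - x))^2 < r^2" using zx by (intro power_strict_mono) auto
  ultimately show False by simp
qed

lemma dG_large:
  assumes t: "pi < t" "t < 2 * pi" and x: "x \<in> sector t"
  shows "cmod x * sin (pi / t * arg0 x) \<le> dG (sector t) x"
    and "pi / t * dG (sector t) x \<le> cmod x * sin (pi / t * arg0 x)"
proof -
  define a where "a = pi / t"
  define r where "r = cmod x"
  define phi where "phi = arg0 x"
  have x0: "x \<noteq> 0" and p: "0 < phi" "phi < t" using x by (auto simp: sector_def phi_def)
  have r0: "0 < r" using x0 by (simp add: r_def)
  have a0: "0 < a" "a < 1" using t by (auto simp: a_def field_simps)
  have at: "a * t = pi" using t by (simp add: a_def)
  have xp: "x = complex_of_real r * cis phi" using arg0_polar[of x] by (simp add: r_def phi_def)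
  have ImX: "Im x = r * sin phi" and ReX: "Re x = r * cos phi" by (simp_all add: xp)
  have hlX: "hl t x = r * sin (t - phi)" by (simp add: hl_arg0 r_def phi_def)
  have st: "sin t < 0" using t by (intro sin_lt_zero) auto
  have q0: "0 \<notin> sector t" by (simp add: sector_def)
  have f: "frontier (sector t) \<noteq> {}" using dG_upper(2)[OF x q0] .
  have sS: "z \<in> sector t \<longleftrightarrow> 0 < Im z \<or> 0 < hl t z" for z using sector_iff_large[OF t] .
  have sym: "sin (a * phi) = sin (a * (t - phi))"
  proof -
    have "a * (t - phi) = pi - a * phi" using at by (simp add: algebra_simps)
    then show ?thesis by simp
  qed
  have "r * sin (a * phi) \<le> dG (sector t) x"
  proof (cases "phi \<le> pi / 2")
    case True
    have "sin (a * phi) \<le> sin phi" using True a0 p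
      by (intro sin_monotone_2pi_le) (auto simp: mult_le_cancel_right1 intro: order_trans[of _ 0])
    then have R: "r * sin (a * phi) \<le> Im x" using r0 ImX by simp
    have "ball x (Im x) \<subseteq> sector t"
    proof
      fix z assume "z \<in> ball x (Im x)"
      then have "cmod (z - x) < Im x" by (simp add: dist_norm norm_minus_commute)
      then have "0 < Im z" using Im_lipschitz[of z x] by linarith
      then show "z \<in> sector t" using sS by simp
    qed
    then have "Im x \<le> dG (sector t) x" by (rule dG_lower[OF _ f])
    then show ?thesis using R by simp
  next
    case F1: False
    show ?thesis
    proof (cases "t - pi / 2 \<le> phi")
      case True
      have "sin (a * (t - phi)) \<le> sin (t - phi)" using True a0 p
        by (intro sin_monotone_2pi_le) (auto simp: mult_le_cancel_right1 intro: order_trans[of _ 0])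
      then have R: "r * sin (a * phi) \<le> hl t x" using r0 hlX sym by simp
      have "ball x (hl t x) \<subseteq> sector t"
      proof
        fix z assume "z \<in> ball x (hl t x)"
        then have "cmod (z - x) < hl t x" by (simp add: dist_norm norm_minus_commute)
        then have "0 < hl t z" using hl_lipschitz[of t z x] by linarith
        then show "z \<in> sector t" using sS by simp
      qed
      then have "hl t x \<le> dG (sector t) x" by (rule dG_lower[OF _ f])
      then show ?thesis using R by simp
    next
      case False
      have "ball x r \<subseteq> sector t"
      proof
        fix z assume "z \<in> ball x r"
        then have "cmod (z - x) < r" by (simp add: dist_norm norm_minus_commute)
        then have "0 < Im z \<or> 0 < hl t z"
          using F1 False t r0 xp by (intro middle_ball[of t phi r x z]) auto
        then show "z \<in> sector t" using sS by simp
      qed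
      then have "r \<le> dG (sector t) x" by (rule dG_lower[OF _ f])
      moreover have "r * sin (a * phi) \<le> r * 1" using r0 sin_le_one[of "a * phi"] by (intro mult_left_mono) auto
      ultimately show ?thesis by simp
    qed
  qed
  then show "cmod x * sin (pi / t * arg0 x) \<le> dG (sector t) x" by (simp add: r_def phi_def a_def)
  have "a * dG (sector t) x \<le> r * sin (a * phi)"
  proof (cases "phi \<le> pi / 2")
    case True
    have c: "0 \<le> cos phi" using True p by (intro cos_ge_zero) auto
    have "0 \<le> Re x" using ReX c r0 by simp
    then have "Re x * sin t \<le> 0" using st by (simp add: mult_nonneg_nonpos)
    then have q: "complex_of_real (Re x) \<notin> sector t"
      using sS[of "complex_of_real (Re x)"] by (simp add: hl_def)
    have "0 \<le> sin phi" using p True by (intro sin_ge_zero) auto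
    then have d: "dG (sector t) x \<le> r * sin phi"
      using dG_upper(1)[OF x q] dist_Re[of x] ImX r0 by simp
    have "a * sin phi \<le> sin (a * phi)" using a0 p True by (intro sin_mult_ge) auto
    then have "a * (r * sin phi) \<le> r * sin (a * phi)" using r0
      by (metis mult.left_commute mult_le_cancel_left_pos)
    moreover have "a * dG (sector t) x \<le> a * (r * sin phi)" using d a0 by simp
    ultimately show ?thesis by linarith
  next
    case F1: False
    show ?thesis
    proof (cases "t - pi / 2 \<le> phi")
      case True
      define c where "c = Re x * cos t + Im x * sin t"
      have "c = r * cos (t - phi)" by (simp add: c_def ReX ImX cos_diff algebra_simps)
      moreover have "0 \<le> cos (t - phi)" using True p by (intro cos_ge_zero) auto
      ultimately have c0: "0 \<le> c" using r0 by simp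
      have "c * sin t \<le> 0" using c0 st by (simp add: mult_nonneg_nonpos)
      then have q: "complex_of_real c * cis t \<notin> sector t"
        using sS[of "complex_of_real c * cis t"] hl_line[of t c] by simp
      have "0 \<le> sin (t - phi)" using p True by (intro sin_ge_zero) auto
      then have d: "dG (sector t) x \<le> r * sin (t - phi)"
        using dG_upper(1)[OF x q] dist_line[of x t] hlX r0
        by (simp add: c_def abs_mult)
      have "a * sin (t - phi) \<le> sin (a * (t - phi))" using a0 p True by (intro sin_mult_ge) auto
      then have "a * (r * sin (t - phi)) \<le> r * sin (a * phi)" using r0 sym
        by (metis mult.left_commute mult_le_cancel_left_pos)
      moreover have "a * dG (sector t) x \<le> a * (r * sin (t - phi))" using d a0 by simp
      ultimately show ?thesis by linarith
    next
      case False
      have d: "dG (sector t) x \<le> r" using dG_upper(1)[OF x q0] by (simp add: r_def)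
      have sa: "a \<le> sin (a * (pi / 2))" using sin_mult_ge[of a "pi/2"] a0 by simp
      have "a \<le> sin (a * phi)"
      proof (cases "a * phi \<le> pi / 2")
        case True
        have "a * (pi / 2) \<le> a * phi" using F1 a0 by simp
        moreover have "- (pi / 2) \<le> a * (pi / 2)" using a0 pi_gt_zero by (simp add: order_trans[of _ 0])
        ultimately have "sin (a * (pi / 2)) \<le> sin (a * phi)" using True
          by (intro sin_monotone_2pi_le) auto
        then show ?thesis using sa by simp
      next
        case F2: False
        have "a * phi \<le> a * (t - pi / 2)" using False a0 by simp
        then have "a * (pi / 2) \<le> pi - a * phi" using at by (simp add: algebra_simps)
        moreover have "- (pi / 2) \<le> a * (pi / 2)" using a0 pi_gt_zero by (simp add: order_trans[of _ 0])
        ultimately have "sin (a * (pi / 2)) \<le> sin (pi - a * phi)" using F2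
          by (intro sin_monotone_2pi_le) auto
        then show ?thesis using sa by simp
      qed
      then have "a * r \<le> r * sin (a * phi)" using r0 by (simp add: mult.commute)
      moreover have "a * dG (sector t) x \<le> a * r" using d a0 by simp
      ultimately show ?thesis by linarith
    qed
  qed
  then show "pi / t * dG (sector t) x \<le> cmod x * sin (pi / t * arg0 x)"
    by (simp add: r_def phi_def a_def)
qed

lemma core_lower_small:
  fixes X Y p P Q b2 c :: real
  assumes X: "0 \<le> X" and Y: "c * X \<le> Y" and h1: "Q - P \<le> c * (b2 - p)"
    and h2: "0 \<le> b2 - p" and h3: "p * Q \<le> P * b2"
  shows "(X + p) * (Y + Q) \<le> (X + b2) * (Y + P)"
proof -
  have "X * (Q - P) \<le> X * (c * (b2 - p))" using h1 X by (rule mult_left_mono)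
  also have "\<dots> = (c * X) * (b2 - p)" by simp
  also have "\<dots> \<le> Y * (b2 - p)" using Y h2 by (rule mult_right_mono)
  finally have "X * (Q - P) \<le> Y * (b2 - p)" .
  then show ?thesis using h3 by (simp add: algebra_simps)
qed

lemma core_U2:
  fixes X Y Q b2 s2 c :: real
  assumes X: "0 \<le> X" and Y: "c * X \<le> Y" and h1: "1 - Q \<le> c * (s2 - b2)"
    and h2: "b2 \<le> s2 * Q" and h3: "b2 \<le> s2"
  shows "(Y + 1) * (X + b2) \<le> (Y + Q) * (X + s2)"
proof -
  have "X * (1 - Q) \<le> X * (c * (s2 - b2))" using h1 X by (rule mult_left_mono)
  also have "\<dots> = (c * X) * (s2 - b2)" by simp
  also have "\<dots> \<le> Y * (s2 - b2)" using Y h3 by (intro mult_right_mono) auto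
  finally have "X * (1 - Q) \<le> Y * (s2 - b2)" .
  then show ?thesis using h2 by (simp add: algebra_simps)
qed

lemma core_L4:
  fixes X Y s2 a :: real
  assumes X: "0 < X" and Y: "0 < Y" and K: "1 / X \<le> a^2 / Y + (a^2 - 1) / 3"
    and L: "3 \<le> s2 * (2 * a^2 + 1)" and s: "0 < s2"
  shows "(X + s2) * Y \<le> a^2 * s2 * X * (Y + 1)"
proof -
  have "1 / s2 \<le> (2 * a^2 + 1) / 3" using L s by (simp add: field_simps)
  then have "(a^2 - 1) / 3 \<le> a^2 - 1 / s2" by (simp add: field_simps)
  then have "1 / X \<le> a^2 / Y + a^2 - 1 / s2" using K by linarith
  then have "(s2 * X * Y) * (1 / X) \<le> (s2 * X * Y) * (a^2 / Y + a^2 - 1 / s2)"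
    using X Y s by (intro mult_left_mono) auto
  moreover have "(s2 * X * Y) * (1 / X) = s2 * Y" using X by simp
  moreover have "(s2 * X * Y) * (a^2 / Y + a^2 - 1 / s2) = a^2 * s2 * X + a^2 * s2 * X * Y - X * Y"
    using Y s by (simp add: field_simps)
  ultimately have "s2 * Y \<le> a^2 * s2 * X + a^2 * s2 * X * Y - X * Y" by simp
  then show ?thesis by (simp add: algebra_simps)
qed

lemma core_upper_small:
  fixes X Y p P Q b2 s2 a :: real
  assumes X: "0 \<le> X" and Y: "a^2 * X \<le> Y" and hP: "P \<le> a^2 * p" and P0: "0 \<le> P"
    and K: "1 \<le> a^2 * s2" and s: "0 < s2" and Q0: "0 \<le> Q"
    and U2: "(Y + 1) * (X + b2) \<le> (Y + Q) * (X + s2)"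
    and L4: "(X + s2) * Y \<le> a^2 * s2 * X * (Y + 1)"
  shows "(X + b2) * (Y + P) \<le> a^2 * s2 * (X + p) * (Y + Q)"
proof -
  have "0 \<le> a^2 * X" using X by simp
  then have Y0: "0 \<le> Y" using Y by linarith
  have "X \<le> a^2 * s2 * X" using K X by (simp add: mult_le_cancel_right1)
  also have "\<dots> = s2 * (a^2 * X)" by simp
  also have "\<dots> \<le> s2 * Y" using Y s by (intro mult_left_mono) auto
  finally have XY: "X \<le> s2 * Y" .
  have "(X + s2) * P \<le> (X + s2) * (a^2 * p)" using hP X s by (intro mult_left_mono) auto
  also have "\<dots> = a^2 * p * (X + s2)" by simp
  also have "\<dots> \<le> a^2 * p * (s2 * (Y + 1))"
  proof (rule mult_left_mono)
    show "X + s2 \<le> s2 * (Y + 1)" using XY by (simp add: algebra_simps)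
    show "0 \<le> a^2 * p" using hP P0 by linarith
  qed
  finally have A: "(X + s2) * P \<le> a^2 * s2 * p * (Y + 1)" by (simp add: algebra_simps)
  have B: "(X + s2) * (Y + P) \<le> a^2 * s2 * (X + p) * (Y + 1)"
    using A L4 by (simp add: algebra_simps)
  have "(X + b2) * (Y + P) * (Y + 1) = ((Y + 1) * (X + b2)) * (Y + P)" by simp
  also have "\<dots> \<le> ((Y + Q) * (X + s2)) * (Y + P)" using U2 Y0 P0 by (intro mult_right_mono) auto
  also have "\<dots> = (Y + Q) * ((X + s2) * (Y + P))" by simp
  also have "\<dots> \<le> (Y + Q) * (a^2 * s2 * (X + p) * (Y + 1))" using B Y0 Q0 by (intro mult_left_mono) auto
  also have "\<dots> = (a^2 * s2 * (X + p) * (Y + Q)) * (Y + 1)" by simp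
  finally have "(X + b2) * (Y + P) * (Y + 1) \<le> (a^2 * s2 * (X + p) * (Y + Q)) * (Y + 1)" .
  then show ?thesis using Y0 by (simp add: mult_le_cancel_right_pos add_nonneg_pos)
qed

lemma core_lower_large:
  fixes X Y p P Q c :: real
  assumes c1: "c \<le> 1" and c0: "0 \<le> c" and X: "0 \<le> X" and Y0: "0 \<le> Y"
    and Yb: "c * X \<le> Y * (1 + (1 - c) * X)"
    and hP: "c * p \<le> P" and PQ: "P \<le> Q" and P1: "P \<le> 1" and Q1: "Q \<le> 1"
    and p0: "0 \<le> p" and P0: "0 \<le> P"
  shows "c * (X + p) * (Y + Q) \<le> (Y + P) * (X + p + Q - P)"
proof -
  define b where "b = 1 - c"
  have b0: "0 \<le> b" using c1 by (simp add: b_def)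
  define D where "D = b * (X + p) + Q - P"
  have "0 \<le> b * (X + p)" using b0 X p0 by simp
  then have D0: "0 \<le> D" using PQ by (simp add: D_def)
  define R0 where "R0 = P * (p + Q - P) - c * p * Q"
  have R00: "0 \<le> R0"
  proof (cases "P \<le> p")
    case True
    have "R0 = P * (p - P) + Q * (P - c * p)" by (simp add: R0_def algebra_simps)
    moreover have "0 \<le> P * (p - P)" using True P0 by simp
    moreover have "0 \<le> Q * (P - c * p)" using hP P0 PQ by simp
    ultimately show ?thesis by linarith
  next
    case False
    have "R0 = (P - p) * (Q - P) + Q * p * b" by (simp add: R0_def b_def algebra_simps)
    moreover have "0 \<le> (P - p) * (Q - P)" using False PQ by simp
    moreover have "0 \<le> Q * p * b" using P0 PQ p0 b0 by simp
    ultimately show ?thesis by linarith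
  qed
  define E where "E = 1 + b * X"
  have E0: "0 < E" using b0 X by (simp add: E_def add_pos_nonneg)
  define Tg where "Tg = (Y + P) * (X + p + Q - P) - c * (X + p) * (Y + Q)"
  have T1: "Tg = Y * D + (X * (P - c * Q) + R0)"
    by (simp add: Tg_def D_def R0_def b_def algebra_simps)
  have "c * X * D \<le> (Y * E) * D" using Yb D0 by (intro mult_right_mono) (auto simp: E_def b_def)
  then have "c * X * D + E * (X * (P - c * Q) + R0) \<le> E * Tg"
    by (simp add: T1 algebra_simps)
  moreover have "c * X * D + E * (X * (P - c * Q) + R0)
      = X^2 * (b * ((1 - b) * (1 - Q) + P)) + X * (b * ((1 - b) * p + P + R0)) + R0"
    by (simp add: D_def E_def b_def power2_eq_square algebra_simps)
  moreover have "0 \<le> X^2 * (b * ((1 - b) * (1 - Q) + P))"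
  proof -
    have "0 \<le> (1 - b) * (1 - Q)" using c0 Q1 by (simp add: b_def)
    then have "0 \<le> (1 - b) * (1 - Q) + P" using P0 by linarith
    then show ?thesis using b0 by simp
  qed
  moreover have "0 \<le> X * (b * ((1 - b) * p + P + R0))"
  proof -
    have "0 \<le> (1 - b) * p" using c0 p0 by (simp add: b_def)
    then have "0 \<le> (1 - b) * p + P + R0" using P0 R00 by linarith
    then show ?thesis using b0 X by simp
  qed
  ultimately have "0 \<le> E * Tg" using R00 by linarith
  then have "0 \<le> Tg" using E0 by (simp add: zero_le_mult_iff)
  then show ?thesis by (simp add: Tg_def)
qed

lemma core_upper_large:
  fixes X Y p P Q c :: real
  assumes Yc: "Y \<le> c * X" and X: "0 \<le> X" and c0: "0 \<le> c" and Y0: "0 \<le> Y"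
    and PQ: "P \<le> Q" and hP: "P - P^2 \<le> c * p" and P0: "0 \<le> P" and Q1: "Q \<le> 1" and p0: "0 \<le> p"
  shows "(Y + P) * (c * X + Q - P) \<le> c * (X + p) * (Y + Q)"
proof -
  have diff: "(Y + P) * (c * X + Q - P) - c * (X + p) * (Y + Q)
      = c * X * (P - Q) + Y * (Q - P - c * p) + (P * (Q - P) - c * p * Q)"
    by (simp add: algebra_simps)
  have R: "P * (Q - P) - c * p * Q \<le> 0"
  proof (cases "P - c * p \<le> 0")
    case True
    have "P * (Q - P) - c * p * Q = Q * (P - c * p) - P^2" by (simp add: power2_eq_square algebra_simps)
    moreover have "Q * (P - c * p) \<le> 0" using True P0 PQ by (simp add: mult_nonneg_nonpos)
    ultimately show ?thesis using zero_le_power2[of P] by linarith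
  next
    case False
    have "Q * (P - c * p) \<le> 1 * (P - c * p)" using False Q1 by (intro mult_right_mono) auto
    moreover have "P * (Q - P) - c * p * Q = Q * (P - c * p) - P^2" by (simp add: power2_eq_square algebra_simps)
    ultimately show ?thesis using hP by simp
  qed
  have M: "c * X * (P - Q) + Y * (Q - P - c * p) \<le> 0"
  proof (cases "0 \<le> Q - P - c * p")
    case True
    have "Y * (Q - P - c * p) \<le> (c * X) * (Q - P - c * p)" using Yc True by (rule mult_right_mono)
    moreover have "c * X * (P - Q) + (c * X) * (Q - P - c * p) = - (c * c * X * p)" by (simp add: algebra_simps)
    moreover have "0 \<le> c * c * X * p" using c0 X p0 by simp
    ultimately show ?thesis by linarith
  next
    case False
    have Y0': "0 \<le> c * X" using c0 X by simp
    have "c * X * (P - Q) \<le> 0" using Y0' PQ by (simp add: mult_nonneg_nonpos)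
    moreover have "Y * (Q - P - c * p) \<le> 0" using False Y0 by (simp add: mult_nonneg_nonpos)
    ultimately show ?thesis by linarith
  qed
  show ?thesis using diff R M by linarith
qed

lemma sin_sq_diff: "sin (u + v) * sin (u - v) = (sin u)^2 - (sin v)^2" for u v :: real
proof -
  have "sin (u + v) * sin (u - v) = (sin u * cos v)^2 - (cos u * sin v)^2"
    by (simp add: sin_add sin_diff power2_eq_square algebra_simps)
  also have "\<dots> = (sin u)^2 * (1 - (sin v)^2) - (1 - (sin u)^2) * (sin v)^2"
    by (simp add: power_mult_distrib cos_squared_eq)
  also have "\<dots> = (sin u)^2 - (sin v)^2" by (simp add: algebra_simps)
  finally show ?thesis .
qed

lemma sinh_sq_exp: "4 * (sinh z)^2 = exp (2 * z) + exp (- (2 * z)) - 2" for z :: real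
proof -
  have "4 * (sinh z)^2 = (exp z - exp (- z))^2" by (simp add: sinh_field_def power_divide)
  also have "\<dots> = (exp z)^2 + (exp (- z))^2 - 2 * (exp z * exp (- z))" by (simp add: power2_diff)
  also have "exp z * exp (- z) = 1" by (simp add: exp_minus)
  also have "(exp z)^2 = exp (2 * z)" by (simp add: exp_double[symmetric] mult.commute)
  also have "(exp (- z))^2 = exp (- (2 * z))" by (simp add: exp_double[symmetric] mult.commute)
  finally show ?thesis by simp
qed

lemma sinh_ratio:
  fixes r s k :: real assumes r: "0 < r" and s: "0 < s"
  shows "4 * (r powr k) * (s powr k) * (sinh (k * (ln (r / s) / 2)))^2 = (r powr k - s powr k)^2"
proof -
  have ld: "ln (r / s) = ln r - ln s" using r s by (simp add: ln_div)
  have l: "2 * (k * (ln (r / s) / 2)) = k * ln r - k * ln s" by (simp add: ld right_diff_distrib)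
  have e1: "exp (2 * (k * (ln (r / s) / 2))) = r powr k / s powr k"
    unfolding l using r s by (simp add: powr_def exp_diff)
  have l2: "- (2 * (k * (ln (r / s) / 2))) = k * ln s - k * ln r" using l by linarith
  have e2: "exp (- (2 * (k * (ln (r / s) / 2)))) = s powr k / r powr k"
    unfolding l2 using r s by (simp add: powr_def exp_diff)
  have R: "0 < r powr k" "0 < s powr k" using r s by auto
  have "4 * (r powr k) * (s powr k) * (sinh (k * (ln (r / s) / 2)))^2
      = (r powr k) * (s powr k) * (r powr k / s powr k + s powr k / r powr k - 2)"
    using sinh_sq_exp[of "k * (ln (r / s) / 2)"] e1 e2 by simp
  also have "\<dots> = (r powr k - s powr k)^2" using R by (simp add: field_simps power2_eq_square)
  finally show ?thesis .
qed

lemma cmod_cis_diff_sq: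
  "(cmod (complex_of_real R * cis al - complex_of_real S * cis be))^2 = R^2 + S^2 - 2 * R * S * cos (al - be)"
proof -
  have "(cmod (complex_of_real R * cis al - complex_of_real S * cis be))^2
      = (R * cos al - S * cos be)^2 + (R * sin al - S * sin be)^2" by (simp add: cmod_power2)
  also have "\<dots> = R^2 * ((cos al)^2 + (sin al)^2) + S^2 * ((cos be)^2 + (sin be)^2)
        - 2 * R * S * (cos al * cos be + sin al * sin be)"
    by (simp only: power2_eq_square) algebra
  also have "\<dots> = R^2 + S^2 - 2 * R * S * cos (al - be)" by (simp add: cos_diff)
  finally show ?thesis .
qed

lemma cos_2_sin: "cos (2 * x) = 1 - 2 * (sin x)^2" for x :: real
  by (simp add: cos_double_sin)

lemma cmod_cis_diff_sq2:
  assumes R: "0 < R" and S: "0 < S"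
  shows "(cmod (complex_of_real R * cis al - complex_of_real S * cis be))^2
       = (R - S)^2 + 4 * R * S * (sin ((al - be) / 2))^2"
proof -
  have h: "cos (2 * ((al - be) / 2)) = 1 - 2 * (sin ((al - be) / 2))^2" by (rule cos_2_sin)
  have eq: "2 * ((al - be) / 2) = al - be" by simp
  have c: "cos (al - be) = 1 - 2 * (sin ((al - be) / 2))^2" using h unfolding eq .
  have "(cmod (complex_of_real R * cis al - complex_of_real S * cis be))^2 = R^2 + S^2 - 2 * R * S * cos (al - be)"
    by (rule cmod_cis_diff_sq)
  also have "\<dots> = (R - S)^2 + 4 * R * S * (sin ((al - be) / 2))^2"
    unfolding c by (simp add: power2_eq_square algebra_simps)
  finally show ?thesis .
qed

lemma tanh_artanh_real:
  fixes q :: real assumes q: "0 \<le> q" "q < 1" shows "tanh (artanh q) = q"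
proof -
  have p: "0 < (1 + q) / (1 - q)" using q by simp
  have "- 2 * artanh q = - ln ((1 + q) / (1 - q))" by (simp add: artanh_def)
  then have "exp (- 2 * artanh q) = inverse ((1 + q) / (1 - q))"
    using p by (simp add: exp_minus)
  then have e: "exp (- 2 * artanh q) = (1 - q) / (1 + q)" by simp
  have "tanh (artanh q) = (1 - (1 - q) / (1 + q)) / (1 + (1 - q) / (1 + q))"
    by (simp only: tanh_real_altdef e)
  also have "\<dots> = q" using q by (simp add: field_simps)
  finally show ?thesis .
qed

lemma cis_cnj': "cnj (complex_of_real S * cis b) = complex_of_real S * cis (- b)"
  by (simp add: cis_cnj)

lemma setup_formula:
  fixes t :: real and x y :: complex
  assumes t0: "0 < t" and t2: "t < 2 * pi" and x: "x \<in> sector t" and y: "y \<in> sector t"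
  defines "a \<equiv> pi / t" and "r \<equiv> cmod x" and "s \<equiv> cmod y" and "phi \<equiv> arg0 x" and "psi \<equiv> arg0 y"
  defines "A \<equiv> (phi - psi) / 2" and "B \<equiv> (phi + psi) / 2" and "T \<equiv> ln (r / s) / 2"
  defines "X \<equiv> (sinh T)^2" and "Y \<equiv> (sinh (a * T))^2"
  defines "th \<equiv> tanh (rho_S t x y / 2)"
  shows "th^2 * (Y + (sin (a * B))^2) = Y + (sin (a * A))^2"
    and "0 \<le> th" and "0 < (sin (a * B))^2"
    and "(sin (a * B))^2 - (sin (a * A))^2 = sin (a * phi) * sin (a * psi)"
    and "(cmod (x - y))^2 = 4 * r * s * (X + (sin A)^2)"
proof -
  have x0: "x \<noteq> 0" and y0: "y \<noteq> 0" using x y by (auto simp: sector_def)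
  have r0: "0 < r" and s0: "0 < s" using x0 y0 by (auto simp: r_def s_def)
  have p: "0 < phi" "phi < t" and q: "0 < psi" "psi < t" using x y by (auto simp: sector_def phi_def psi_def)
  have a0: "0 < a" and at: "a * t = pi" using t0 by (auto simp: a_def)
  have aphi: "0 < a * phi" "a * phi < pi"
  proof -
    show "0 < a * phi" using a0 p by simp
    have "a * phi < a * t" using a0 p by simp
    then show "a * phi < pi" using at by simp
  qed
  have apsi: "0 < a * psi" "a * psi < pi"
  proof -
    show "0 < a * psi" using a0 q by simp
    have "a * psi < a * t" using a0 q by simp
    then show "a * psi < pi" using at by simp
  qed
  define R where "R = r powr a"
  define S where "S = s powr a"
  have R0: "0 < R" and S0: "0 < S" using r0 s0 by (auto simp: R_def S_def)
  have u: "spow x a = complex_of_real R * cis (a * phi)" by (simp add: spow_def R_def r_def phi_def)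
  have v: "spow y a = complex_of_real S * cis (a * psi)" by (simp add: spow_def S_def s_def psi_def)
  have RS: "(R - S)^2 = 4 * R * S * Y"
    using sinh_ratio[OF r0 s0, of a] by (simp add: R_def S_def Y_def T_def)
  have e1: "(a * phi - a * psi) / 2 = a * A" by (simp add: A_def algebra_simps)
  have e2: "(a * phi - - (a * psi)) / 2 = a * B" by (simp add: B_def algebra_simps)
  have uv: "(cmod (spow x a - spow y a))^2 = 4 * R * S * (Y + (sin (a * A))^2)"
    unfolding u v cmod_cis_diff_sq2[OF R0 S0] e1 RS by (simp add: algebra_simps)
  have uv': "(cmod (spow x a - cnj (spow y a)))^2 = 4 * R * S * (Y + (sin (a * B))^2)"
    unfolding u v cis_cnj' cmod_cis_diff_sq2[OF R0 S0] e2 RS by (simp add: algebra_simps)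
  have QP: "(sin (a * B))^2 - (sin (a * A))^2 = sin (a * phi) * sin (a * psi)"
  proof -
    have "a * B + a * A = a * phi" "a * B - a * A = a * psi" by (simp_all add: A_def B_def field_simps)
    then show ?thesis using sin_sq_diff[of "a * B" "a * A"] by simp
  qed
  then show "(sin (a * B))^2 - (sin (a * A))^2 = sin (a * phi) * sin (a * psi)" .
  have spos: "0 < sin (a * phi) * sin (a * psi)" using aphi apsi by (simp add: sin_gt_zero)
  have Q0: "0 < (sin (a * B))^2" using QP spos zero_le_power2[of "sin (a * A)"] by linarith
  then show "0 < (sin (a * B))^2" .
  have Y0: "0 \<le> Y" by (simp add: Y_def)
  define N where "N = cmod (spow x a - spow y a)"
  define D where "D = cmod (spow x a - cnj (spow y a))"
  have "0 < Y + (sin (a * B))^2" using Q0 Y0 by linarith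
  then have "0 < 4 * R * S * (Y + (sin (a * B))^2)" using R0 S0 by simp
  then have D0: "0 < D^2" using uv' by (simp add: D_def)
  then have D0': "0 < D" by (simp add: D_def)
  have N0: "0 \<le> N" by (simp add: N_def)
  have "N^2 < D^2" using uv uv' QP spos R0 S0 by (simp add: N_def D_def)
  then have ND: "N < D" using N0 D0' by (simp add: power_less_imp_less_base)
  define qq where "qq = N / D"
  have qq0: "0 \<le> qq" "qq < 1" using N0 D0' ND by (auto simp: qq_def)
  have "rho_S t x y / 2 = artanh qq"
    by (simp add: rho_S_def rho_H_def a_def qq_def N_def D_def)
  then have thq: "th = qq" using tanh_artanh_real[OF qq0] by (simp add: th_def)
  then show "0 \<le> th" using qq0 by simp
  have "th^2 * D^2 = N^2" using thq D0' by (simp add: qq_def power_divide)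
  then have "th^2 * (4 * R * S * (Y + (sin (a * B))^2)) = 4 * R * S * (Y + (sin (a * A))^2)"
    using uv uv' by (simp add: N_def D_def)
  then have "(4 * R * S) * (th^2 * (Y + (sin (a * B))^2)) = (4 * R * S) * (Y + (sin (a * A))^2)"
    by (simp add: algebra_simps)
  then show "th^2 * (Y + (sin (a * B))^2) = Y + (sin (a * A))^2" using R0 S0
    by (subst (asm) mult_cancel_left) simp
  have xp: "x = complex_of_real r * cis phi" using arg0_polar[of x] by (simp add: r_def phi_def)
  have yp: "y = complex_of_real s * cis psi" using arg0_polar[of y] by (simp add: s_def psi_def)
  have rs: "(r - s)^2 = 4 * r * s * X"
    using sinh_ratio[OF r0 s0, of 1] r0 s0 by (simp add: X_def T_def)
  show "(cmod (x - y))^2 = 4 * r * s * (X + (sin A)^2)"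
    by (subst xp, subst yp, simp only: cmod_cis_diff_sq2[OF r0 s0] rs A_def) (simp add: algebra_simps)
qed

lemma sin_mult_cos:
  fixes b A :: real
  assumes b1: "1 \<le> b" and b2: "b \<le> 2" and A0: "0 \<le> A" and Api: "A \<le> pi"
  shows "sin (b * A) \<le> b * sin A * cos ((b - 1) * A)"
proof -
  define e where "e = b - 1"
  have e0: "0 \<le> e" "e \<le> 1" using b1 b2 by (auto simp: e_def)
  have "(\<lambda>u. e * sin u * cos (e * u) - cos u * sin (e * u)) 0 \<le> (\<lambda>u. e * sin u * cos (e * u) - cos u * sin (e * u)) A"
  proof (rule mono_by_deriv[where g = "\<lambda>u. e * sin u * cos (e * u) - cos u * sin (e * u)"
        and g' = "\<lambda>u. (1 - e^2) * sin u * sin (e * u)"])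
    fix u :: real
    show "((\<lambda>u. e * sin u * cos (e * u) - cos u * sin (e * u)) has_real_derivative (1 - e^2) * sin u * sin (e * u)) (at u)"
      by (auto intro!: derivative_eq_intros simp: power2_eq_square algebra_simps)
  next
    fix u assume u: "0 \<le> u" "u \<le> A"
    have "e * u \<le> 1 * u" using e0 u by (intro mult_right_mono) auto
    then have "0 \<le> sin (e * u)" using u e0 Api by (intro sin_ge_zero) auto
    moreover have "0 \<le> sin u" using u Api by (intro sin_ge_zero) auto
    moreover have "0 \<le> 1 - e^2" using e0 by (simp add: power_le_one)
    ultimately show "0 \<le> (1 - e^2) * sin u * sin (e * u)" by simp
  qed (use A0 in auto)
  then have g: "cos A * sin (e * A) \<le> e * sin A * cos (e * A)" by simp
  have "b * A = A + e * A" by (simp add: e_def algebra_simps)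
  then have "sin (b * A) = sin A * cos (e * A) + cos A * sin (e * A)" by (simp add: sin_add)
  also have "\<dots> \<le> sin A * cos (e * A) + e * sin A * cos (e * A)" using g by simp
  also have "\<dots> = b * sin A * cos (e * A)" by (simp add: e_def algebra_simps)
  finally show ?thesis by (simp add: e_def)
qed

lemma key_large:
  fixes a A :: real
  assumes a1: "1/2 \<le> a" and a2: "a \<le> 1" and A0: "0 \<le> A" and AT: "A \<le> pi / (2 * a)"
  shows "(sin (a * A))^2 * (cos (a * A))^2 \<le> a^2 * (sin A)^2 * (1 - cos (pi / (2 * a)) - (sin (a * A))^2)"
proof -
  have a0: "0 < a" using a1 by simp
  have Api: "A \<le> pi"
  proof -
    have "pi / (2 * a) \<le> pi" using a1 by (simp add: field_simps)
    then show ?thesis using AT by simp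
  qed
  have aA: "2 * a * A \<le> pi" using AT a0 by (simp add: field_simps)
  have i: "sin ((2 * a) * A) \<le> (2 * a) * sin A * cos ((2 * a - 1) * A)"
    using a1 a2 A0 Api by (intro sin_mult_cos) auto
  have s2: "0 \<le> sin ((2 * a) * A)" using aA A0 a0 by (intro sin_ge_zero) auto
  have "(sin ((2 * a) * A))^2 \<le> ((2 * a) * sin A * cos ((2 * a - 1) * A))^2"
    using i s2 by (intro power_mono) auto
  moreover have "sin ((2 * a) * A) = 2 * sin (a * A) * cos (a * A)"
    using sin_double[of "a * A"] by (simp add: mult.assoc)
  ultimately have I: "(sin (a * A))^2 * (cos (a * A))^2 \<le> a^2 * (sin A)^2 * (cos ((2 * a - 1) * A))^2"
    by (simp add: power_mult_distrib)
  have id: "(sin (a * A))^2 - (sin ((2 * a - 1) * A))^2 = sin ((3 * a - 1) * A) * sin ((1 - a) * A)"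
  proof -
    have "a * A + (2 * a - 1) * A = (3 * a - 1) * A" "a * A - (2 * a - 1) * A = (1 - a) * A"
      by (simp_all add: algebra_simps)
    then show ?thesis using sin_sq_diff[of "a * A" "(2 * a - 1) * A"] by simp
  qed
  have t1: "sin ((3 * a - 1) * A) \<le> 1" by simp
  have "0 \<le> (3 * a - 1) * A" using a1 A0 by simp
  moreover have "(3 * a - 1) * A \<le> pi"
  proof -
    have "(3 * a - 1) * A \<le> (3 * a - 1) * (pi / (2 * a))" using AT a1 by (intro mult_left_mono) auto
    also have "\<dots> \<le> pi" using a1 a2 by (simp add: field_simps)
    finally show ?thesis .
  qed
  ultimately have t1': "0 \<le> sin ((3 * a - 1) * A)" by (intro sin_ge_zero)
  have b1: "(1 - a) * A \<le> pi / (2 * a) - pi / 2"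
  proof -
    have "(1 - a) * A \<le> (1 - a) * (pi / (2 * a))" using AT a2 by (intro mult_left_mono) auto
    also have "\<dots> = pi / (2 * a) - pi / 2" using a0 by (simp add: field_simps)
    finally show ?thesis .
  qed
  have b2: "pi / (2 * a) - pi / 2 \<le> pi / 2" using a1 by (simp add: field_simps)
  have "sin ((1 - a) * A) \<le> sin (pi / (2 * a) - pi / 2)"
    using b1 b2 a2 A0 by (intro sin_monotone_2pi_le) (auto intro: order_trans[of _ 0])
  also have "\<dots> = - cos (pi / (2 * a))" by (simp add: sin_diff)
  finally have t2: "sin ((1 - a) * A) \<le> - cos (pi / (2 * a))" .
  have t2': "0 \<le> sin ((1 - a) * A)" using a2 A0 Api
  proof -
    have "(1 - a) * A \<le> 1 * A" using a0 A0 by (intro mult_right_mono) auto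
    then show ?thesis using a2 A0 Api by (intro sin_ge_zero) auto
  qed
  have II: "(sin (a * A))^2 - (sin ((2 * a - 1) * A))^2 \<le> - cos (pi / (2 * a))"
  proof -
    have "sin ((3 * a - 1) * A) * sin ((1 - a) * A) \<le> 1 * sin ((1 - a) * A)"
      using t1 t2' by (intro mult_right_mono) auto
    then show ?thesis using id t2 by simp
  qed
  have "(cos ((2 * a - 1) * A))^2 \<le> 1 - cos (pi / (2 * a)) - (sin (a * A))^2"
    using II by (simp add: cos_squared_eq)
  then have "a^2 * (sin A)^2 * (cos ((2 * a - 1) * A))^2 \<le> a^2 * (sin A)^2 * (1 - cos (pi / (2 * a)) - (sin (a * A))^2)"
    by (intro mult_left_mono) auto
  then show ?thesis using I by linarith
qed

lemma core_upper_large2: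
  fixes X Y p P Q K c :: real
  assumes Yc: "Y \<le> c * X" and Y0: "0 \<le> Y" and X0: "0 \<le> X" and c0: "0 \<le> c"
    and K1: "1 \<le> K" and PQ: "P \<le> Q" and Q1: "Q \<le> 1" and P0: "0 \<le> P" and p0: "0 \<le> p"
    and h: "P * (1 - P) \<le> c * p * (K - P)"
  shows "(Y + P) * (c * (X + p) + Q - P) \<le> K * c * (X + p) * (Y + Q)"
proof -
  have star: "P * (Q - P) \<le> c * p * (K * Q - P)"
  proof (cases "P \<le> c * p * K")
    case True
    have "P * (c * p * K - P) \<le> Q * (c * p * K - P)" using True PQ by (intro mult_right_mono) auto
    moreover have "P * (c * p) \<le> P * (c * p * K)"
    proof -
      have "0 \<le> c * p" using c0 p0 by simp
      then have "(c * p) * 1 \<le> (c * p) * K" using K1 by (intro mult_left_mono) auto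
      then show ?thesis using P0 by (intro mult_left_mono) auto
    qed
    ultimately show ?thesis by (simp add: algebra_simps)
  next
    case False
    have "1 * (c * p * K - P) \<le> Q * (c * p * K - P)" using False Q1 by (intro mult_right_mono_neg) auto
    then show ?thesis using h by (simp add: algebra_simps)
  qed
  define cY where "cY = c * (X + p) * (K - 1) - (Q - P)"
  have F: "K * c * (X + p) * (Y + Q) - (Y + P) * (c * (X + p) + Q - P)
      = Y * cY + (c * X * (K * Q - P) + (c * p * (K * Q - P) - P * (Q - P)))"
    by (simp add: cY_def algebra_simps)
  have KQ: "0 \<le> K * Q - P"
  proof -
    have "1 * Q \<le> K * Q" using K1 PQ P0 by (intro mult_right_mono) auto
    then show ?thesis using PQ by simp
  qed
  have cXKQ: "0 \<le> c * X * (K * Q - P)" using c0 X0 KQ by simp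
  show ?thesis
  proof (cases "0 \<le> cY")
    case True
    then have "0 \<le> Y * cY" using Y0 by simp
    then show ?thesis using F star cXKQ by linarith
  next
    case False
    have "(c * X) * cY \<le> Y * cY" using Yc False by (intro mult_right_mono_neg) auto
    moreover have "(c * X) * cY + c * X * (K * Q - P) = c * c * X * (X + p) * (K - 1) + c * X * (K - 1) * Q"
      by (simp add: cY_def algebra_simps)
    moreover have "0 \<le> c * c * X * (X + p) * (K - 1)" using c0 X0 p0 K1 by simp
    moreover have "0 \<le> c * X * (K - 1) * Q" using c0 X0 K1 PQ P0 by simp
    ultimately show ?thesis using F star by linarith
  qed
qed

lemma final_upper:
  fixes th L m dx dy K C :: real
  assumes th0: "0 \<le> th" and L0: "0 \<le> L" and m: "m = min dx dy" and m0: "0 < m"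
    and H: "th^2 * (L^2 + 4 * (dx * dy)) \<le> K * L^2" and C0: "0 \<le> C" and CK: "C^2 = 2 * K"
  shows "th \<le> C * (L / (L + 2 * m))"
proof -
  have "m * m \<le> dx * dy" using m m0 by (auto simp: min_def intro: mult_mono)
  then have "th^2 * (L^2 + 4 * (m * m)) \<le> th^2 * (L^2 + 4 * (dx * dy))"
    by (intro mult_left_mono) auto
  also have "\<dots> \<le> K * L^2" by (rule H)
  finally have A: "th^2 * (L^2 + 4 * (m * m)) \<le> K * L^2" .
  have "(L + 2 * m)^2 \<le> 2 * (L^2 + 4 * (m * m))"
  proof -
    have "0 \<le> (L - 2 * m)^2" by simp
    then show ?thesis by (simp add: power2_eq_square algebra_simps)
  qed
  then have "th^2 * (L + 2 * m)^2 \<le> th^2 * (2 * (L^2 + 4 * (m * m)))" by (intro mult_left_mono) auto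
  also have "\<dots> = 2 * (th^2 * (L^2 + 4 * (m * m)))" by simp
  also have "\<dots> \<le> 2 * (K * L^2)" using A by simp
  also have "\<dots> = (C * L)^2" using CK by (simp add: power_mult_distrib)
  finally have "(th * (L + 2 * m))^2 \<le> (C * L)^2" by (simp add: power_mult_distrib)
  then have "th * (L + 2 * m) \<le> C * L" using C0 L0 by (simp add: power2_le_iff_abs_le)
  moreover have "0 < L + 2 * m" using L0 m0 by simp
  ultimately show ?thesis by (simp add: field_simps)
qed

lemma final_lower:
  fixes th L m c :: real
  assumes th0: "0 \<le> th" and L0: "0 \<le> L" and m0: "0 < m" and c0: "0 \<le> c"
    and H: "(c * L)^2 \<le> th^2 * (L + 2 * m)^2"
  shows "c * (L / (L + 2 * m)) \<le> th"
proof -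
  have "(c * L)^2 \<le> (th * (L + 2 * m))^2" using H by (simp add: power_mult_distrib)
  then have "c * L \<le> th * (L + 2 * m)" using th0 L0 m0
    by (simp add: power2_le_iff_abs_le)
  moreover have "0 < L + 2 * m" using L0 m0 by simp
  ultimately show ?thesis by (simp add: field_simps)
qed

lemma prod_le_lip:
  fixes dx dy L :: real
  assumes "0 \<le> dx" "0 \<le> dy" "\<bar>dx - dy\<bar> \<le> L"
  shows "L^2 + 4 * (dx * dy) \<le> (L + 2 * min dx dy)^2"
proof (cases "dx \<le> dy")
  case True
  then have "dx * dy \<le> dx * (dx + L)" using assms by (intro mult_left_mono) auto
  then show ?thesis using True by (simp add: min_def power2_eq_square algebra_simps)
next
  case False
  then have "dx * dy \<le> (dy + L) * dy" using assms by (intro mult_right_mono) auto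
  then show ?thesis using False by (simp add: min_def power2_eq_square algebra_simps)
qed

lemma sin_sq_abs: "(sin \<bar>A\<bar>)^2 = (sin A)^2" for A :: real
  by (cases "0 \<le> A") auto

lemma sin_a_sq_abs: "(sin (a * \<bar>A\<bar>))^2 = (sin (a * A))^2" for a A :: real
  by (cases "0 \<le> A") auto

lemma Lower_trig:
  fixes a A B0 T :: real
  assumes a: "1 \<le> a" and AB: "\<bar>A\<bar> \<le> B0" and aB: "a * (B0 + \<bar>A\<bar>) \<le> pi"
  shows "((sinh T)^2 + (sin A)^2) * ((sinh (a * T))^2 + (sin (a * B0))^2)
       \<le> ((sinh T)^2 + (sin B0)^2) * ((sinh (a * T))^2 + (sin (a * A))^2)"
proof (rule core_lower_small[where c = "a^2"])
  have B0: "0 \<le> B0" using AB by linarith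
  show "0 \<le> (sinh T)^2" by simp
  show "a^2 * (sinh T)^2 \<le> (sinh (a * T))^2" using sinh_sq_ge[OF a] .
  have e1: "(sin B0)^2 - (sin A)^2 = sin (B0 + A) * sin (B0 - A)" using sin_sq_diff[of B0 A] by simp
  have e2: "(sin (a * B0))^2 - (sin (a * A))^2 = sin (a * (B0 + A)) * sin (a * (B0 - A))"
    using sin_sq_diff[of "a * B0" "a * A"] by (simp add: algebra_simps)
  have r1: "0 \<le> B0 + A" "0 \<le> B0 - A" using AB by auto
  have r2: "a * (B0 + A) \<le> pi" "a * (B0 - A) \<le> pi"
  proof -
    have "a * (B0 + A) \<le> a * (B0 + \<bar>A\<bar>)" "a * (B0 - A) \<le> a * (B0 + \<bar>A\<bar>)" using a by (auto intro!: mult_left_mono)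
    then show "a * (B0 + A) \<le> pi" "a * (B0 - A) \<le> pi" using aB by linarith+
  qed
  have r3: "B0 + A \<le> pi" "B0 - A \<le> pi"
  proof -
    have "B0 + A \<le> a * (B0 + A)" "B0 - A \<le> a * (B0 - A)" using a r1 by (auto simp: mult_le_cancel_right1)
    then show "B0 + A \<le> pi" "B0 - A \<le> pi" using r2 by linarith+
  qed
  have s1: "sin (a * (B0 + A)) \<le> a * sin (B0 + A)" using a r1 r2 by (intro sin_mult_le) auto
  have s2: "sin (a * (B0 - A)) \<le> a * sin (B0 - A)" using a r1 r2 by (intro sin_mult_le) auto
  have n1: "0 \<le> sin (a * (B0 + A))" "0 \<le> sin (a * (B0 - A))" using a r1 r2 by (auto intro!: sin_ge_zero)
  have n2: "0 \<le> sin (B0 + A)" "0 \<le> sin (B0 - A)" using r1 r3 by (auto intro!: sin_ge_zero)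
  have "sin (a * (B0 + A)) * sin (a * (B0 - A)) \<le> (a * sin (B0 + A)) * (a * sin (B0 - A))"
    using s1 s2 n1 n2 by (intro mult_mono) auto
  then show "(sin (a * B0))^2 - (sin (a * A))^2 \<le> a^2 * ((sin B0)^2 - (sin A)^2)"
    unfolding e1 e2 by (simp add: power2_eq_square algebra_simps)
  show "0 \<le> (sin B0)^2 - (sin A)^2" unfolding e1 using n2 by simp
  have "a * B0 \<le> a * (B0 + \<bar>A\<bar>)" using a by (intro mult_left_mono) auto
  then have aB0: "a * B0 \<le> pi" using aB by linarith
  have m: "sin \<bar>A\<bar> * sin (a * B0) \<le> sin B0 * sin (a * \<bar>A\<bar>)"
    using a AB aB0 by (intro sin_ratio_mono) auto
  have "B0 \<le> pi" using r3 r1 by linarith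
  then have n3: "0 \<le> sin \<bar>A\<bar>" "0 \<le> sin (a * B0)" using AB aB0 B0 a by (auto intro!: sin_ge_zero)
  have "(sin \<bar>A\<bar> * sin (a * B0))^2 \<le> (sin B0 * sin (a * \<bar>A\<bar>))^2"
    using m n3 by (intro power_mono) auto
  then show "(sin A)^2 * (sin (a * B0))^2 \<le> (sin (a * A))^2 * (sin B0)^2"
    by (simp add: power_mult_distrib sin_sq_abs sin_a_sq_abs mult.commute)
qed

lemma U_trig:
  fixes a A B0 T :: real
  assumes a: "1 \<le> a" and AB: "\<bar>A\<bar> \<le> B0" and Bc: "B0 \<le> pi / (2 * a)"
  shows "((sinh T)^2 + (sin B0)^2) * ((sinh (a * T))^2 + (sin (a * A))^2)
       \<le> a^2 * (sin (pi / (2 * a)))^2 * ((sinh T)^2 + (sin A)^2) * ((sinh (a * T))^2 + (sin (a * B0))^2)"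
proof -
  define c where "c = pi / (2 * a)"
  define X where "X = (sinh T)^2"
  define Y where "Y = (sinh (a * T))^2"
  have a0: "0 < a" using a by simp
  have ac: "a * c = pi / 2" using a0 by (simp add: c_def)
  have c0: "0 < c" and c1: "c \<le> pi / 2" using a by (auto simp: c_def field_simps)
  have B0: "0 \<le> B0" using AB by linarith
  have aB: "a * B0 \<le> pi / 2" using Bc a0 ac by (metis c_def mult_left_mono less_imp_le)
  have X0: "0 \<le> X" by (simp add: X_def)
  have XY: "a^2 * X \<le> Y" unfolding X_def Y_def by (rule sinh_sq_ge[OF a])
  have "a * \<bar>A\<bar> \<le> a * B0" using AB a by (intro mult_left_mono) auto
  then have aA: "a * \<bar>A\<bar> \<le> pi / 2" using aB by linarith
  have "0 \<le> a * \<bar>A\<bar>" using a0 by simp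
  then have aA': "a * \<bar>A\<bar> \<le> pi" using aA by linarith
  have "sin (a * \<bar>A\<bar>) \<le> a * sin \<bar>A\<bar>" using a aA' by (intro sin_mult_le) auto
  moreover have "0 \<le> sin (a * \<bar>A\<bar>)" using aA' a by (intro sin_ge_zero) auto
  ultimately have "(sin (a * \<bar>A\<bar>))^2 \<le> (a * sin \<bar>A\<bar>)^2" by (intro power_mono) auto
  then have hP: "(sin (a * A))^2 \<le> a^2 * (sin A)^2" by (simp add: power_mult_distrib sin_sq_abs sin_a_sq_abs)
  have "(1/a) * sin (pi / 2) \<le> sin ((1/a) * (pi / 2))" using a by (intro sin_mult_ge) auto
  then have "1 / a \<le> sin c" by (simp add: c_def mult.commute)
  then have asc: "1 \<le> a * sin c" using a0 by (simp add: field_simps)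
  then have K: "1 \<le> a^2 * (sin c)^2" by (metis power_mult_distrib one_le_power)
  have sc0: "0 < sin c" using c0 c1 by (intro sin_gt_zero) auto
  have cB: "cos (a * B0) = sin (a * (c - B0))" "cos (a * B0) = sin (a * (c + B0))"
  proof -
    have "a * (c - B0) = pi / 2 - a * B0" "a * (c + B0) = pi / 2 + a * B0" using ac by (simp_all add: algebra_simps)
    then show "cos (a * B0) = sin (a * (c - B0))" "cos (a * B0) = sin (a * (c + B0))"
      by (simp_all add: sin_diff sin_add)
  qed
  have "a * (c + B0) \<le> pi" using ac aB by (simp add: algebra_simps)
  moreover have "a * (c - B0) \<le> pi"
  proof -
    have "0 \<le> a * B0" using a0 B0 by simp
    moreover have "a * (c - B0) = a * c - a * B0" by (simp add: algebra_simps)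
    ultimately show ?thesis using ac pi_gt_zero by linarith
  qed
  moreover have "0 \<le> c - B0" using Bc by (simp add: c_def)
  ultimately have "sin (a * (c - B0)) \<le> a * sin (c - B0)" "sin (a * (c + B0)) \<le> a * sin (c + B0)"
    using a B0 c0 by (auto intro!: sin_mult_le)
  then have u1: "cos (a * B0) \<le> a * sin (c - B0)" "cos (a * B0) \<le> a * sin (c + B0)"
    using cB by simp_all
  have "0 \<le> a * B0" using a0 B0 by simp
  then have cpos: "0 \<le> cos (a * B0)" using aB pi_gt_zero by (intro cos_ge_zero) linarith+
  have "cos (a * B0) * cos (a * B0) \<le> (a * sin (c - B0)) * (a * sin (c + B0))"
    using u1 cpos by (intro mult_mono) auto
  moreover have ss: "(sin c)^2 - (sin B0)^2 = sin (c + B0) * sin (c - B0)" using sin_sq_diff[of c B0] by simp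
  moreover have cc: "1 - (sin (a * B0))^2 = cos (a * B0) * cos (a * B0)"
    using cos_squared_eq[of "a * B0"] by (simp add: power2_eq_square)
  moreover have "(a * sin (c - B0)) * (a * sin (c + B0)) = a^2 * (sin (c + B0) * sin (c - B0))"
    by (simp add: power2_eq_square)
  ultimately have h1: "1 - (sin (a * B0))^2 \<le> a^2 * ((sin c)^2 - (sin B0)^2)"
    by simp
  have "sin B0 * sin (a * c) \<le> sin c * sin (a * B0)"
    using a B0 Bc ac by (intro sin_ratio_mono) (auto simp: c_def)
  then have sB: "sin B0 \<le> sin c * sin (a * B0)" using ac by simp
  have "0 \<le> sin B0" using B0 Bc c1 by (intro sin_ge_zero) (auto simp: c_def)
  then have "(sin B0)^2 \<le> (sin c * sin (a * B0))^2" using sB by (intro power_mono) auto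
  then have h2: "(sin B0)^2 \<le> (sin c)^2 * (sin (a * B0))^2" by (simp add: power_mult_distrib)
  have "(sin c)^2 * (sin (a * B0))^2 \<le> (sin c)^2 * 1" by (intro mult_left_mono) (auto simp: abs_square_le_1)
  then have h3: "(sin B0)^2 \<le> (sin c)^2" using h2 by simp
  have U2: "(Y + 1) * (X + (sin B0)^2) \<le> (Y + (sin (a * B0))^2) * (X + (sin c)^2)"
    using core_U2[OF X0 XY h1 h2 h3] .
  have L4: "(X + (sin c)^2) * Y \<le> a^2 * (sin c)^2 * X * (Y + 1)"
  proof (cases "T = 0")
    case True then show ?thesis by (simp add: X_def Y_def)
  next
    case False
    have Xp: "0 < X" using False by (simp add: X_def)
    have "a * T \<noteq> 0" using False a0 by simp
    then have Yp: "0 < Y" by (simp add: Y_def)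
    have K1': "1 / X \<le> a^2 / Y + (a^2 - 1) / 3" unfolding X_def Y_def using K1[OF a False] .
    have L5': "3 \<le> (sin c)^2 * (2 * a^2 + 1)" using L5[OF a] by (simp add: c_def)
    show ?thesis using core_L4[OF Xp Yp K1' L5'] sc0 by simp
  qed
  have "(X + (sin B0)^2) * (Y + (sin (a * A))^2) \<le> a^2 * (sin c)^2 * (X + (sin A)^2) * (Y + (sin (a * B0))^2)"
    using core_upper_small[OF X0 XY hP _ K _ _ U2 L4] sc0 by simp
  then show ?thesis by (simp add: X_def Y_def c_def)
qed

lemma polar_facts:
  assumes "x \<in> sector t"
  shows "Im x = cmod x * sin (arg0 x)" "hl t x = cmod x * sin (t - arg0 x)"
    "0 < cmod x" "0 < arg0 x" "arg0 x < t"
  using assms by (auto simp: Im_arg0 hl_arg0 sector_def)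

lemma dG_nonneg: "0 \<le> dG S x" by (simp add: dG_def infdist_nonneg)

lemma dG_lip: "\<bar>dG S x - dG S y\<bar> \<le> cmod (x - y)"
  unfolding dG_def using infdist_triangle_abs[of x "frontier S" y] by (simp add: dist_norm)

lemma regime_small:
  fixes t :: real and x y :: complex
  assumes t0: "0 < t" and tpi: "t \<le> pi" and x: "x \<in> sector t" and y: "y \<in> sector t"
  shows "jstar (sector t) x y \<le> tanh (rho_S t x y / 2)"
    and "tanh (rho_S t x y / 2) \<le> sqrt 2 * (pi / t) * sin (t / 2) * jstar (sector t) x y"
proof -
  have t2: "t < 2 * pi" using tpi pi_gt_zero by linarith
  define a where "a = pi / t"
  define r where "r = cmod x"
  define s where "s = cmod y"
  define phi where "phi = arg0 x"
  define psi where "psi = arg0 y"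
  define A where "A = (phi - psi) / 2"
  define B where "B = (phi + psi) / 2"
  define T where "T = ln (r / s) / 2"
  define X where "X = (sinh T)^2"
  define Y where "Y = (sinh (a * T))^2"
  define th where "th = tanh (rho_S t x y / 2)"
  define L where "L = cmod (x - y)"
  define dx where "dx = dG (sector t) x"
  define dy where "dy = dG (sector t) y"
  define m where "m = min dx dy"
  have F1: "th^2 * (Y + (sin (a * B))^2) = Y + (sin (a * A))^2"
    unfolding th_def Y_def a_def B_def A_def T_def r_def s_def phi_def psi_def
    by (rule setup_formula(1)[OF t0 t2 x y])
  have th0: "0 \<le> th"
    unfolding th_def by (rule setup_formula(2)[OF t0 t2 x y])
  have Q0: "0 < (sin (a * B))^2"
    unfolding a_def B_def phi_def psi_def by (rule setup_formula(3)[OF t0 t2 x y])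
  have L2: "L^2 = 4 * r * s * (X + (sin A)^2)"
    unfolding L_def X_def T_def r_def s_def A_def phi_def psi_def by (rule setup_formula(5)[OF t0 t2 x y])
  have px: "Im x = r * sin phi" "hl t x = r * sin (t - phi)" "0 < r" "0 < phi" "phi < t"
    using polar_facts[OF x] by (simp_all add: r_def phi_def)
  have py: "Im y = s * sin psi" "hl t y = s * sin (t - psi)" "0 < s" "0 < psi" "psi < t"
    using polar_facts[OF y] by (simp_all add: s_def psi_def)
  have a1: "1 \<le> a" using t0 tpi by (simp add: a_def field_simps)
  have at: "a * t = pi" using t0 by (simp add: a_def)
  have dxs: "dx \<le> Im x" "dx \<le> hl t x" "min (Im x) (hl t x) \<le> dx"
    using dG_small[OF t0 tpi x] by (simp_all add: dx_def)
  have dys: "dy \<le> Im y" "dy \<le> hl t y" "min (Im y) (hl t y) \<le> dy"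
    using dG_small[OF t0 tpi y] by (simp_all add: dy_def)
  have pos: "0 < Im x" "0 < hl t x" "0 < Im y" "0 < hl t y"
    using x y sector_iff_small[OF t0 tpi] by auto
  have "0 < min (Im x) (hl t x)" "0 < min (Im y) (hl t y)" using pos by simp_all
  then have "0 < dx" "0 < dy" using dxs(3) dys(3) by linarith+
  then have m0: "0 < m" by (simp add: m_def)
  have L0: "0 \<le> L" by (simp add: L_def)
  have jdef: "jstar (sector t) x y = L / (L + 2 * m)"
    by (simp add: jstar_def L_def m_def dx_def dy_def)
  have Y0: "0 \<le> Y" by (simp add: Y_def)
  have YQ: "0 < Y + (sin (a * B))^2" using Y0 Q0 by linarith
  have lin: "A \<le> B" "- A \<le> B" "A \<le> t - B" "- A \<le> t - B" "B + A < t" "B - A < t"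
    "t - B + A < t" "t - B - A < t"
    using px(4,5) py(4,5) unfolding A_def B_def by (auto simp: field_simps)
  have absA: "\<bar>A\<bar> \<le> B" "\<bar>A\<bar> \<le> t - B" "B + \<bar>A\<bar> < t" "t - B + \<bar>A\<bar> < t"
    using lin by (auto simp: abs_if)
  have e1: "(sin B)^2 - (sin A)^2 = sin phi * sin psi"
  proof -
    have "B + A = phi" "B - A = psi" by (simp_all add: A_def B_def field_simps)
    then show ?thesis using sin_sq_diff[of B A] by simp
  qed
  have e2: "(sin (t - B))^2 - (sin A)^2 = sin (t - phi) * sin (t - psi)"
  proof -
    have h1: "t - B + A = t - psi" "t - B - A = t - phi" by (simp_all add: A_def B_def field_simps)
    have "sin (t - B + A) * sin (t - B - A) = (sin (t - B))^2 - (sin A)^2" by (rule sin_sq_diff)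
    then show ?thesis unfolding h1 by (simp add: mult.commute)
  qed
  have sQ: "(sin (a * (t - B)))^2 = (sin (a * B))^2"
  proof -
    have "a * (t - B) = pi - a * B" using at by (simp add: algebra_simps)
    then show ?thesis by simp
  qed
  have ImIm: "4 * r * s * (X + (sin B)^2) = L^2 + 4 * (Im x * Im y)"
    using L2 e1 px py by (simp add: algebra_simps)
  have hlhl: "4 * r * s * (X + (sin (t - B))^2) = L^2 + 4 * (hl t x * hl t y)"
    using L2 e2 px py by (simp add: algebra_simps)
  have rs0: "0 < 4 * r * s" using px py by simp
  have "a * (B + \<bar>A\<bar>) \<le> a * t" using absA(3) a1 by (intro mult_left_mono) auto
  then have "a * (B + \<bar>A\<bar>) \<le> pi" using at by simp
  then have LT1: "(X + (sin A)^2) * (Y + (sin (a * B))^2) \<le> (X + (sin B)^2) * (Y + (sin (a * A))^2)"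
    using Lower_trig[OF a1 absA(1)] by (simp add: X_def Y_def)
  have "a * (t - B + \<bar>A\<bar>) \<le> a * t" using absA(4) a1 by (intro mult_left_mono) auto
  then have "a * (t - B + \<bar>A\<bar>) \<le> pi" using at by simp
  then have LT2: "(X + (sin A)^2) * (Y + (sin (a * B))^2) \<le> (X + (sin (t - B))^2) * (Y + (sin (a * A))^2)"
    using Lower_trig[OF a1 absA(2)] sQ by (simp add: X_def Y_def)
  have lowH: "L^2 \<le> th^2 * (L^2 + 4 * (u * v))"
    if LT: "(X + (sin A)^2) * (Y + (sin (a * B))^2) \<le> (X + b) * (Y + (sin (a * A))^2)"
      and uv: "4 * r * s * (X + b) = L^2 + 4 * (u * v)" for b u v
  proof -
    have "(X + b) * (Y + (sin (a * A))^2) = (X + b) * (th^2 * (Y + (sin (a * B))^2))" by (simp only: F1)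
    also have "\<dots> = (th^2 * (X + b)) * (Y + (sin (a * B))^2)" by simp
    finally have eq: "(X + b) * (Y + (sin (a * A))^2) = (th^2 * (X + b)) * (Y + (sin (a * B))^2)" .
    have "(X + (sin A)^2) * (Y + (sin (a * B))^2) \<le> (th^2 * (X + b)) * (Y + (sin (a * B))^2)"
      using LT eq by linarith
    then have "X + (sin A)^2 \<le> th^2 * (X + b)" using YQ by simp
    then have "4 * r * s * (X + (sin A)^2) \<le> 4 * r * s * (th^2 * (X + b))" using rs0 by (intro mult_left_mono) auto
    then have "L^2 \<le> 4 * r * s * (th^2 * (X + b))" using L2 by simp
    also have "\<dots> = th^2 * (4 * r * s * (X + b))" by (simp add: ac_simps)
    also have "\<dots> = th^2 * (L^2 + 4 * (u * v))" by (simp only: uv)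
    finally show ?thesis .
  qed
  have H1: "L^2 \<le> th^2 * (L^2 + 4 * (Im x * Im y))" using lowH[OF LT1 ImIm] .
  have H2: "L^2 \<le> th^2 * (L^2 + 4 * (hl t x * hl t y))" using lowH[OF LT2 hlhl] .
  have P1: "L^2 + 4 * (Im x * Im y) \<le> (L + 2 * min (Im x) (Im y))^2"
    using pos Im_lipschitz[of x y] by (intro prod_le_lip) (auto simp: L_def)
  have P2: "L^2 + 4 * (hl t x * hl t y) \<le> (L + 2 * min (hl t x) (hl t y))^2"
    using pos hl_lipschitz[of t x y] by (intro prod_le_lip) (auto simp: L_def)
  have "(1 * L)^2 \<le> th^2 * (L + 2 * m)^2"
  proof (cases "min (Im x) (Im y) \<le> min (hl t x) (hl t y)")
    case True
    then have "min (Im x) (Im y) \<le> m" using dxs dys by (simp add: m_def min_def split: if_splits)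
    then have "(L + 2 * min (Im x) (Im y))^2 \<le> (L + 2 * m)^2" using pos L0 by (intro power_mono) auto
    then have "th^2 * (L + 2 * min (Im x) (Im y))^2 \<le> th^2 * (L + 2 * m)^2" by (intro mult_left_mono) auto
    moreover have "th^2 * (L^2 + 4 * (Im x * Im y)) \<le> th^2 * (L + 2 * min (Im x) (Im y))^2"
      using P1 by (intro mult_left_mono) auto
    ultimately show ?thesis using H1 by simp
  next
    case False
    then have "min (hl t x) (hl t y) \<le> m" using dxs dys by (simp add: m_def min_def split: if_splits)
    then have "(L + 2 * min (hl t x) (hl t y))^2 \<le> (L + 2 * m)^2" using pos L0 by (intro power_mono) auto
    then have "th^2 * (L + 2 * min (hl t x) (hl t y))^2 \<le> th^2 * (L + 2 * m)^2" by (intro mult_left_mono) auto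
    moreover have "th^2 * (L^2 + 4 * (hl t x * hl t y)) \<le> th^2 * (L + 2 * min (hl t x) (hl t y))^2"
      using P2 by (intro mult_left_mono) auto
    ultimately show ?thesis using H2 by simp
  qed
  then have "1 * (L / (L + 2 * m)) \<le> th" by (intro final_lower[OF th0 L0 m0]) auto
  then show "jstar (sector t) x y \<le> tanh (rho_S t x y / 2)" by (simp add: jdef th_def)
  define K0 where "K0 = a^2 * (sin (t / 2))^2"
  have c2: "pi / (2 * a) = t / 2" using t0 by (simp add: a_def)
  have upH: "th^2 * (L^2 + 4 * (u * v)) \<le> K0 * L^2"
    if UT: "(X + b) * (Y + (sin (a * A))^2) \<le> K0 * (X + (sin A)^2) * (Y + (sin (a * B))^2)"
      and uv: "4 * r * s * (X + b) = L^2 + 4 * (u * v)" for b u v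
  proof -
    have "(th^2 * (X + b)) * (Y + (sin (a * B))^2) = (X + b) * (th^2 * (Y + (sin (a * B))^2))" by simp
    also have "\<dots> = (X + b) * (Y + (sin (a * A))^2)" by (simp only: F1)
    finally have eq: "(th^2 * (X + b)) * (Y + (sin (a * B))^2) = (X + b) * (Y + (sin (a * A))^2)" .
    have "(th^2 * (X + b)) * (Y + (sin (a * B))^2) \<le> (K0 * (X + (sin A)^2)) * (Y + (sin (a * B))^2)"
      using UT eq by (metis mult.assoc)
    then have "th^2 * (X + b) \<le> K0 * (X + (sin A)^2)" using YQ by simp
    then have "4 * r * s * (th^2 * (X + b)) \<le> 4 * r * s * (K0 * (X + (sin A)^2))" using rs0 by (intro mult_left_mono) auto
    moreover have "4 * r * s * (th^2 * (X + b)) = th^2 * (L^2 + 4 * (u * v))"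
    proof -
      have "4 * r * s * (th^2 * (X + b)) = th^2 * (4 * r * s * (X + b))" by (simp add: ac_simps)
      also have "\<dots> = th^2 * (L^2 + 4 * (u * v))" by (simp only: uv)
      finally show ?thesis .
    qed
    moreover have "4 * r * s * (K0 * (X + (sin A)^2)) = K0 * L^2" using L2 by (simp add: ac_simps)
    ultimately show ?thesis by simp
  qed
  have dd0: "0 \<le> dx" "0 \<le> dy" by (simp_all add: dx_def dy_def dG_nonneg)
  have HU: "th^2 * (L^2 + 4 * (dx * dy)) \<le> K0 * L^2"
  proof (cases "B \<le> t / 2")
    case True
    have "B \<le> pi / (2 * a)" using True c2 by simp
    then have "(X + (sin B)^2) * (Y + (sin (a * A))^2) \<le> K0 * (X + (sin A)^2) * (Y + (sin (a * B))^2)"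
      using U_trig[OF a1 absA(1)] c2 by (simp add: X_def Y_def K0_def)
    then have h: "th^2 * (L^2 + 4 * (Im x * Im y)) \<le> K0 * L^2" by (rule upH[OF _ ImIm])
    have "dx * dy \<le> Im x * Im y" using dxs dys dd0 by (intro mult_mono) auto
    then have "th^2 * (L^2 + 4 * (dx * dy)) \<le> th^2 * (L^2 + 4 * (Im x * Im y))" by (intro mult_left_mono) auto
    then show ?thesis using h by simp
  next
    case False
    have "t - B \<le> pi / (2 * a)" using False c2 by simp
    then have "(X + (sin (t - B))^2) * (Y + (sin (a * A))^2) \<le> K0 * (X + (sin A)^2) * (Y + (sin (a * B))^2)"
      using U_trig[OF a1 absA(2)] c2 sQ by (simp add: X_def Y_def K0_def)
    then have h: "th^2 * (L^2 + 4 * (hl t x * hl t y)) \<le> K0 * L^2" by (rule upH[OF _ hlhl])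
    have "dx * dy \<le> hl t x * hl t y" using dxs dys dd0 by (intro mult_mono) auto
    then have "th^2 * (L^2 + 4 * (dx * dy)) \<le> th^2 * (L^2 + 4 * (hl t x * hl t y))" by (intro mult_left_mono) auto
    then show ?thesis using h by simp
  qed
  have st: "0 \<le> sin (t / 2)" using t0 tpi by (intro sin_ge_zero) auto
  have C0: "0 \<le> sqrt 2 * a * sin (t / 2)" using a1 st by simp
  have CK: "(sqrt 2 * a * sin (t / 2))^2 = 2 * K0" by (simp add: K0_def power_mult_distrib)
  have "th \<le> (sqrt 2 * a * sin (t / 2)) * (L / (L + 2 * m))"
    by (rule final_upper[OF th0 L0 m_def m0 HU C0 CK])
  then show "tanh (rho_S t x y / 2) \<le> sqrt 2 * (pi / t) * sin (t / 2) * jstar (sector t) x y"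
    by (simp add: jdef th_def a_def)
qed

lemma regime_large:
  fixes t :: real and x y :: complex
  assumes tpi: "pi < t" and t2: "t < 2 * pi" and x: "x \<in> sector t" and y: "y \<in> sector t"
  shows "(pi / t) * jstar (sector t) x y \<le> tanh (rho_S t x y / 2)"
    and "tanh (rho_S t x y / 2) \<le> 2 * sin (t / 4) * jstar (sector t) x y"
proof -
  have t0: "0 < t" using tpi pi_gt_zero by linarith
  define a where "a = pi / t"
  define r where "r = cmod x"
  define s where "s = cmod y"
  define phi where "phi = arg0 x"
  define psi where "psi = arg0 y"
  define A where "A = (phi - psi) / 2"
  define B where "B = (phi + psi) / 2"
  define T where "T = ln (r / s) / 2"
  define X where "X = (sinh T)^2"
  define Y where "Y = (sinh (a * T))^2"
  define th where "th = tanh (rho_S t x y / 2)"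
  define L where "L = cmod (x - y)"
  define dx where "dx = dG (sector t) x"
  define dy where "dy = dG (sector t) y"
  define m where "m = min dx dy"
  define P where "P = (sin (a * A))^2"
  define Q where "Q = (sin (a * B))^2"
  define p where "p = (sin A)^2"
  have F1: "th^2 * (Y + Q) = Y + P"
    unfolding th_def Y_def a_def B_def A_def T_def r_def s_def phi_def psi_def P_def Q_def
    by (rule setup_formula(1)[OF t0 t2 x y])
  have th0: "0 \<le> th"
    unfolding th_def by (rule setup_formula(2)[OF t0 t2 x y])
  have Q0: "0 < Q"
    unfolding Q_def a_def B_def phi_def psi_def by (rule setup_formula(3)[OF t0 t2 x y])
  have QP: "Q - P = sin (a * phi) * sin (a * psi)"
    unfolding Q_def P_def a_def B_def A_def phi_def psi_def by (rule setup_formula(4)[OF t0 t2 x y])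
  have L2: "L^2 = 4 * r * s * (X + p)"
    unfolding L_def X_def T_def r_def s_def A_def phi_def psi_def p_def by (rule setup_formula(5)[OF t0 t2 x y])
  have px: "0 < r" "0 < phi" "phi < t" using polar_facts[OF x] by (simp_all add: r_def phi_def)
  have py: "0 < s" "0 < psi" "psi < t" using polar_facts[OF y] by (simp_all add: s_def psi_def)
  have a0: "0 < a" "a < 1" "1/2 < a" using t0 tpi t2 by (auto simp: a_def field_simps)
  have at: "a * t = pi" using t0 by (simp add: a_def)
  have dxl: "r * sin (a * phi) \<le> dx" "a * dx \<le> r * sin (a * phi)"
    using dG_large[OF tpi t2 x] by (simp_all add: dx_def r_def a_def phi_def)
  have dyl: "s * sin (a * psi) \<le> dy" "a * dy \<le> s * sin (a * psi)"
    using dG_large[OF tpi t2 y] by (simp_all add: dy_def s_def a_def psi_def)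
  have aphi: "0 < a * phi" "a * phi < pi"
  proof -
    show "0 < a * phi" using a0 px by simp
    have "a * phi < a * t" using a0 px by simp
    then show "a * phi < pi" using at by simp
  qed
  have apsi: "0 < a * psi" "a * psi < pi"
  proof -
    show "0 < a * psi" using a0 py by simp
    have "a * psi < a * t" using a0 py by simp
    then show "a * psi < pi" using at by simp
  qed
  have sp: "0 < sin (a * phi)" "0 < sin (a * psi)" using aphi apsi by (simp_all add: sin_gt_zero)
  have dpos: "0 < dx" "0 < dy"
  proof -
    have "0 < r * sin (a * phi)" "0 < s * sin (a * psi)" using px py sp by simp_all
    then show "0 < dx" "0 < dy" using dxl(1) dyl(1) by linarith+
  qed
  have m0: "0 < m" using dpos by (simp add: m_def)
  have L0: "0 \<le> L" by (simp add: L_def)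
  have jdef: "jstar (sector t) x y = L / (L + 2 * m)"
    by (simp add: jstar_def L_def m_def dx_def dy_def)
  have X0: "0 \<le> X" and Y0: "0 \<le> Y" by (simp_all add: X_def Y_def)
  have YQ: "0 < Y + Q" using Y0 Q0 by linarith
  have "0 < sin (a * phi) * sin (a * psi)" using sp by simp
  then have PQ: "P \<le> Q" using QP by linarith
  have P0: "0 \<le> P" and p0: "0 \<le> p" by (simp_all add: P_def p_def)
  have P1: "P \<le> 1" and Q1: "Q \<le> 1" by (simp_all add: P_def Q_def abs_square_le_1)
  have lin: "A < t / 2" "- A < t / 2"
    using px(2,3) py(2,3) unfolding A_def by (auto simp: field_simps)
  have absA: "\<bar>A\<bar> \<le> t / 2" using lin by (auto simp: abs_if)
  have absApi: "\<bar>A\<bar> \<le> pi" using absA t2 by simp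
  have c2: "pi / (2 * a) = t / 2" using t0 by (simp add: a_def)
  have rs0: "0 < 4 * r * s" using px py by simp
  have dd: "r * s * (Q - P) \<le> dx * dy"
  proof -
    have "(r * sin (a * phi)) * (s * sin (a * psi)) \<le> dx * dy"
      by (rule mult_mono[OF dxl(1) dyl(1)]) (use dpos py sp in auto)
    then show ?thesis using QP by (simp add: ac_simps)
  qed
  have dd2: "a^2 * (dx * dy) \<le> r * s * (Q - P)"
  proof -
    have "(a * dx) * (a * dy) \<le> (r * sin (a * phi)) * (s * sin (a * psi))"
      by (rule mult_mono[OF dxl(2) dyl(2)]) (use a0 dpos px sp in auto)
    then show ?thesis using QP by (simp add: power2_eq_square ac_simps)
  qed
  have Yb: "a^2 * X \<le> Y * (1 + (1 - a^2) * X)"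
  proof (cases "T = 0")
    case True then show ?thesis using Y0 by (simp add: X_def)
  next
    case False
    have Xp: "0 < X" using False by (simp add: X_def)
    have "a * T \<noteq> 0" using False a0 by simp
    then have Yp: "0 < Y" by (simp add: Y_def)
    have "a^2 / Y \<le> 1 / X + (1 - a^2) / 3" unfolding X_def Y_def using K2[OF a0(1) _ False] a0 by simp
    moreover have "0 \<le> 1 - a^2" using a0 by (simp add: power_le_one)
    then have "(1 - a^2) / 3 \<le> 1 - a^2" by simp
    ultimately have "a^2 / Y \<le> 1 / X + (1 - a^2)" by linarith
    then have "(X * Y) * (a^2 / Y) \<le> (X * Y) * (1 / X + (1 - a^2))" using Xp Yp by (intro mult_left_mono) auto
    moreover have "(X * Y) * (a^2 / Y) = a^2 * X" using Yp by simp
    moreover have "(X * Y) * (1 / X + (1 - a^2)) = Y * (1 + (1 - a^2) * X)" using Xp by (simp add: field_simps)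
    ultimately show ?thesis by simp
  qed
  have hP: "a^2 * p \<le> P"
  proof -
    have "a * sin \<bar>A\<bar> \<le> sin (a * \<bar>A\<bar>)" using a0 absApi by (intro sin_mult_ge) auto
    moreover have "0 \<le> a * sin \<bar>A\<bar>" using a0 absApi by (simp add: sin_ge_zero)
    ultimately have "(a * sin \<bar>A\<bar>)^2 \<le> (sin (a * \<bar>A\<bar>))^2" by (intro power_mono) auto
    then show ?thesis by (simp add: P_def p_def power_mult_distrib sin_sq_abs sin_a_sq_abs)
  qed
  have CL: "a^2 * (X + p) * (Y + Q) \<le> (Y + P) * (X + p + Q - P)"
    using a0 by (intro core_lower_large[OF _ _ X0 Y0 Yb hP PQ P1 Q1 p0 P0]) (auto simp: power_le_one)
  have "a^2 * (X + p) * (Y + Q) \<le> (th^2 * (X + p + (Q - P))) * (Y + Q)"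
    using CL F1 by (simp add: algebra_simps)
  then have "a^2 * (X + p) \<le> th^2 * (X + p + (Q - P))" using YQ by simp
  then have "4 * r * s * (a^2 * (X + p)) \<le> 4 * r * s * (th^2 * (X + p + (Q - P)))"
    using rs0 by (intro mult_left_mono) auto
  moreover have "4 * r * s * (a^2 * (X + p)) = (a * L)^2" using L2 by (simp add: power_mult_distrib ac_simps)
  moreover have "4 * r * s * (th^2 * (X + p + (Q - P))) = th^2 * (L^2 + 4 * (r * s * (Q - P)))"
    using L2 by (simp add: algebra_simps)
  ultimately have H1: "(a * L)^2 \<le> th^2 * (L^2 + 4 * (r * s * (Q - P)))" by simp
  have "th^2 * (L^2 + 4 * (r * s * (Q - P))) \<le> th^2 * (L^2 + 4 * (dx * dy))"
    using dd by (intro mult_left_mono) auto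
  also have "\<dots> \<le> th^2 * (L + 2 * m)^2"
  proof (intro mult_left_mono)
    show "L^2 + 4 * (dx * dy) \<le> (L + 2 * m)^2" unfolding m_def
      using dpos dG_lip[of "sector t" x y] by (intro prod_le_lip) (auto simp: dx_def dy_def L_def)
  qed auto
  finally have "(a * L)^2 \<le> th^2 * (L + 2 * m)^2" using H1 by simp
  then have "a * (L / (L + 2 * m)) \<le> th" using a0 by (intro final_lower[OF th0 L0 m0]) auto
  then show "(pi / t) * jstar (sector t) x y \<le> tanh (rho_S t x y / 2)"
    by (simp add: jdef th_def a_def)
  define K where "K = 1 - cos (t / 2)"
  have "cos (t / 2) \<le> 0" using tpi t2 by (intro cos_le_zero_mid) auto
  then have K1: "1 \<le> K" by (simp add: K_def)
  have h: "P * (1 - P) \<le> a^2 * p * (K - P)"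
  proof -
    have "\<bar>A\<bar> \<le> pi / (2 * a)" using absA c2 by simp
    then have "(sin (a * \<bar>A\<bar>))^2 * (cos (a * \<bar>A\<bar>))^2
        \<le> a^2 * (sin \<bar>A\<bar>)^2 * (1 - cos (pi / (2 * a)) - (sin (a * \<bar>A\<bar>))^2)"
      using a0 by (intro key_large) auto
    moreover have "(cos (a * \<bar>A\<bar>))^2 = 1 - P"
      by (simp add: P_def cos_squared_eq sin_a_sq_abs)
    ultimately show ?thesis by (simp add: P_def p_def K_def c2 sin_sq_abs sin_a_sq_abs)
  qed
  have YX: "Y \<le> a^2 * X" unfolding X_def Y_def using sinh_sq_le[of a T] a0 by simp
  have CU: "(Y + P) * (a^2 * (X + p) + Q - P) \<le> K * a^2 * (X + p) * (Y + Q)"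
    by (rule core_upper_large2[OF YX Y0 X0 _ K1 PQ Q1 P0 p0 h]) simp
  have "a^2 * (L^2 + 4 * (dx * dy)) \<le> 4 * r * s * (a^2 * (X + p) + Q - P)"
    using dd2 L2 by (simp add: algebra_simps)
  then have "(th^2 * (Y + Q)) * (a^2 * (L^2 + 4 * (dx * dy))) \<le> (th^2 * (Y + Q)) * (4 * r * s * (a^2 * (X + p) + Q - P))"
    using YQ by (intro mult_left_mono) auto
  also have "\<dots> = 4 * r * s * ((Y + P) * (a^2 * (X + p) + Q - P))" using F1 by simp
  also have "\<dots> \<le> 4 * r * s * (K * a^2 * (X + p) * (Y + Q))" using CU rs0 by (intro mult_left_mono) auto
  also have "\<dots> = (a^2 * (Y + Q)) * (K * L^2)" using L2 by (simp add: ac_simps)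
  finally have "(a^2 * (Y + Q)) * (th^2 * (L^2 + 4 * (dx * dy))) \<le> (a^2 * (Y + Q)) * (K * L^2)"
    by (simp add: ac_simps)
  moreover have "0 < a^2 * (Y + Q)" using a0 YQ by simp
  ultimately have HU: "th^2 * (L^2 + 4 * (dx * dy)) \<le> K * L^2" by (rule mult_left_le_imp_le)
  have C0: "0 \<le> 2 * sin (t / 4)" using t0 t2 by (simp add: sin_ge_zero)
  have CK: "(2 * sin (t / 4))^2 = 2 * K"
  proof -
    have "cos (t / 2) = cos (2 * (t / 4))" by simp
    also have "\<dots> = 1 - 2 * (sin (t / 4))^2" by (rule cos_double_sin)
    finally show ?thesis by (simp add: K_def power_mult_distrib)
  qed
  have "th \<le> (2 * sin (t / 4)) * (L / (L + 2 * m))"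
    by (rule final_upper[OF th0 L0 m_def m0 HU C0 CK])
  then show "tanh (rho_S t x y / 2) \<le> 2 * sin (t / 4) * jstar (sector t) x y"
    by (simp add: jdef th_def)
qed

theorem corollary4p8:
  fixes \<theta> :: real and x y :: complex
  assumes "0 < \<theta>" "\<theta> < 2 * pi" "x \<in> sector \<theta>" "y \<in> sector \<theta>"
  shows "(\<theta> < pi \<longrightarrow>
            jstar (sector \<theta>) x y \<le> tanh (rho_S \<theta> x y / 2) \<and>
            tanh (rho_S \<theta> x y / 2) \<le> sqrt 2 * (pi / \<theta>) * sin (\<theta> / 2) * jstar (sector \<theta>) x y)
       \<and> (\<theta> = pi \<longrightarrow>
            jstar (sector \<theta>) x y \<le> tanh (rho_S \<theta> x y / 2) \<and>
            tanh (rho_S \<theta> x y / 2) \<le> sqrt 2 * jstar (sector \<theta>) x y)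
       \<and> (pi < \<theta> \<longrightarrow>
            (pi / \<theta>) * jstar (sector \<theta>) x y \<le> tanh (rho_S \<theta> x y / 2) \<and>
            tanh (rho_S \<theta> x y / 2) \<le> 2 * sin (\<theta> / 4) * jstar (sector \<theta>) x y)"
proof (intro conjI impI)
  assume h: "\<theta> < pi"
  show "jstar (sector \<theta>) x y \<le> tanh (rho_S \<theta> x y / 2)"
    using regime_small(1)[OF assms(1) _ assms(3,4)] h by simp
  show "tanh (rho_S \<theta> x y / 2) \<le> sqrt 2 * (pi / \<theta>) * sin (\<theta> / 2) * jstar (sector \<theta>) x y"
    using regime_small(2)[OF assms(1) _ assms(3,4)] h by simp
next
  assume h: "\<theta> = pi"
  show "jstar (sector \<theta>) x y \<le> tanh (rho_S \<theta> x y / 2)"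
    using regime_small(1)[OF assms(1) _ assms(3,4)] h by simp
  show "tanh (rho_S \<theta> x y / 2) \<le> sqrt 2 * jstar (sector \<theta>) x y"
    using regime_small(2)[OF assms(1) _ assms(3,4)] h by simp
next
  assume h: "pi < \<theta>"
  show "(pi / \<theta>) * jstar (sector \<theta>) x y \<le> tanh (rho_S \<theta> x y / 2)"
    using regime_large(1)[OF h assms(2,3,4)] .
  show "tanh (rho_S \<theta> x y / 2) \<le> 2 * sin (\<theta> / 4) * jstar (sector \<theta>) x y"
    using regime_large(2)[OF h assms(2,3,4)] .
qed

end
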